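(* Let $s>0$, $Y>0$, $\tau\geq 0$, and consider the delay differential system \[ \dot x(t)=x(t)(1-x(t))-y(t)x(t),\qquad \dot y(t)=-sy(t)+Ye^{-s\tau}y(t-\tau)x(t-\tau), \] with initial data $(\phi,\psi)\in X:=C([-\tau,0],\mathbb{R}_+)^2$. Its equilibria are $E_0=(0,0)$, $E_1=(1,0)$ and $E_+=(x_+(\tau),y_+(\tau))=\left(\frac{s}{Y}e^{s\tau},\,1-\frac{s}{Y}e^{s\tau}\right)$. Let $\tau_c=\frac1s\ln\left(\frac{Y}{s}\right)$ and \[ X^0=\{(\phi,\psi)\in X:\ \phi(0)>0 \text{ and there exists } \theta\in[-\tau,0] \text{ with } \phi(\theta)\psi(\theta)>0\}. \] Then: \begin{enumerate} \item $E_0$ is always unstable. \item (a) $E_1$ is unstable if $0\leq\tau<\tau_c$; (b) $E_1$ is globally asymptotically stable with respect to initial data in $X^0$ if $\tau>\tau_c$ (i.e. if $\frac{se^{s\tau}}{Y}>1$). \item Both components of $E_+$ are positive if and only if $0\leq\tau<\tau_c$ (i.e. $\frac{se^{s\tau}}{Y}<1$). Moreover: (a) when both components of $E_+$ are positive and $\tau=0$, $E_+$ is globally asymptotically stable with respect to initial data in $\operatorname{int}\mathbb{R}^2_+$; (b) when both components of $E_+$ are positive (and $\tau\geq0$), the system is uniformly persistent with respect to initial data in $X^0$: there exists $\epsilon>0$, independent of $(\phi,\psi)\in X^0$, such that $\liminf_{t\to\infty}x(t)>\epsilon$ and $\liminf_{t\to\infty}y(t)>\epsilon$. \end{enumerat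e}
   Context: $\mathbb{R}_+=\{x\in\mathbb{R}:x\geq0\}$; $C([-\tau,0],\mathbb{R}_+)$ carries the uniform norm. Local stability of an equilibrium is in the sense of the linearized delay system, i.e. determined by the roots of its characteristic equation; global asymptotic stability with respect to a set of initial data means local asymptotic stability plus convergence to the equilibrium of every solution with initial data in that set. *)

theory Defs
  imports "HOL-Analysis.Analysis"
begin

definition rhs_x :: "real \<Rightarrow> real \<Rightarrow> real" where
  "rhs_x x y = x * (1 - x) - y * x"

definition rhs_y :: "real \<Rightarrow> real \<Rightarrow> real \<Rightarrow> real \<Rightarrow> real \<Rightarrow> real \<Rightarrow> real" where
  "rhs_y s Y \<tau> y yd xd = - s * y + Y * exp (- s * \<tau>) * yd * xd"

definition in_X :: "real \<Rightarrow> (real \<Rightarrow> real) \<Rightarrow> (real \<Rightarrow> real) \<Rightarrow> bool" where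
  "in_X \<tau> \<phi> \<psi> \<longleftrightarrow>
     continuous_on {-\<tau>..0} \<phi> \<and> continuous_on {-\<tau>..0} \<psi> \<and>
     (\<forall>\<theta>\<in>{-\<tau>..0}. \<phi> \<theta> \<ge> 0 \<and> \<psi> \<theta> \<ge> 0)"

definition in_X0 :: "real \<Rightarrow> (real \<Rightarrow> real) \<Rightarrow> (real \<Rightarrow> real) \<Rightarrow> bool" where
  "in_X0 \<tau> \<phi> \<psi> \<longleftrightarrow> in_X \<tau> \<phi> \<psi> \<and> \<phi> 0 > 0 \<and> (\<exists>\<theta>\<in>{-\<tau>..0}. \<phi> \<theta> * \<psi> \<theta> > 0)"

definition is_solution ::
  "real \<Rightarrow> real \<Rightarrow> real \<Rightarrow> (real \<Rightarrow> real) \<Rightarrow> (real \<Rightarrow> real) \<Rightarrow> (real \<Rightarrow> real) \<Rightarrow> (real \<Rightarrow> real) \<Rightarrow> bool" where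
  "is_solution s Y \<tau> \<phi> \<psi> x y \<longleftrightarrow>
     (\<forall>\<theta>\<in>{-\<tau>..0}. x \<theta> = \<phi> \<theta> \<and> y \<theta> = \<psi> \<theta>) \<and>
     continuous_on {-\<tau>..} x \<and> continuous_on {-\<tau>..} y \<and>
     (\<forall>t\<ge>0. (x has_real_derivative rhs_x (x t) (y t)) (at t within {0..}) \<and>
             (y has_real_derivative rhs_y s Y \<tau> (y t) (y (t - \<tau>)) (x (t - \<tau>))) (at t within {0..}))"

text \<open>Linearization at an equilibrium (a,b): u' = A u(t) + B u(t - tau), where
  A, B are the Jacobians of the right-hand side w.r.t. the non-delayed and delayed
  arguments. Characteristic function: det(lambda I - A - e^{-lambda tau} B).\<close>
definition char_fun :: "real \<Rightarrow> real \<Rightarrow> real \<Rightarrow> real \<times> real \<Rightarrow> complex \<Rightarrow> complex" where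
  "char_fun s Y \<tau> E z =
     (let a = fst E; b = snd E; c = Y * exp (- s * \<tau>);
          A11 = 1 - 2 * a - b; A12 = - a; A21 = 0; A22 = - s;
          B11 = 0; B12 = 0; B21 = c * b; B22 = c * a;
          e = exp (- z * of_real \<tau>);
          M11 = z - of_real A11 - e * of_real B11;
          M12 = - of_real A12 - e * of_real B12;
          M21 = - of_real A21 - e * of_real B21;
          M22 = z - of_real A22 - e * of_real B22
      in M11 * M22 - M12 * M21)"

definition locally_asymp_stable :: "real \<Rightarrow> real \<Rightarrow> real \<Rightarrow> real \<times> real \<Rightarrow> bool" where
  "locally_asymp_stable s Y \<tau> E \<longleftrightarrow> (\<forall>z. char_fun s Y \<tau> E z = 0 \<longrightarrow> Re z < 0)"

definition unstable :: "real \<Rightarrow> real \<Rightarrow> real \<Rightarrow> real \<times> real \<Rightarrow> bool" where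
  "unstable s Y \<tau> E \<longleftrightarrow> (\<exists>z. char_fun s Y \<tau> E z = 0 \<and> Re z > 0)"

definition globally_asymp_stable ::
  "real \<Rightarrow> real \<Rightarrow> real \<Rightarrow> real \<times> real \<Rightarrow> ((real \<Rightarrow> real) \<Rightarrow> (real \<Rightarrow> real) \<Rightarrow> bool) \<Rightarrow> bool" where
  "globally_asymp_stable s Y \<tau> E S \<longleftrightarrow>
     locally_asymp_stable s Y \<tau> E \<and>
     (\<forall>\<phi> \<psi> x y. S \<phi> \<psi> \<longrightarrow> is_solution s Y \<tau> \<phi> \<psi> x y \<longrightarrow>
        (x \<longlongrightarrow> fst E) at_top \<and> (y \<longlongrightarrow> snd E) at_top)"

definition E0 :: "real \<times> real" where "E0 = (0, 0)"
definition E1 :: "real \<times> real" where "E1 = (1, 0)"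
definition Eplus :: "real \<Rightarrow> real \<Rightarrow> real \<Rightarrow> real \<times> real" where
  "Eplus s Y \<tau> = (s / Y * exp (s * \<tau>), 1 - s / Y * exp (s * \<tau>))"

definition tau_c :: "real \<Rightarrow> real \<Rightarrow> real" where
  "tau_c s Y = (1 / s) * ln (Y / s)"

text \<open>Initial data in int R^2_+ for tau = 0: phi, psi on [0,0] with positive values.\<close>
definition in_int_R2plus :: "(real \<Rightarrow> real) \<Rightarrow> (real \<Rightarrow> real) \<Rightarrow> bool" where
  "in_int_R2plus \<phi> \<psi> \<longleftrightarrow> \<phi> 0 > 0 \<and> \<psi> 0 > 0"

end

theory Submission
  imports Defs
begin

lemma mono_deriv:
  fixes f f' :: "real \<Rightarrow> real"
  assumes "a \<le> b" "continuous_on {a..b} f"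
    and "\<And>t. a < t \<Longrightarrow> t < b \<Longrightarrow> (f has_real_derivative f' t) (at t)"
    and "\<And>t. a < t \<Longrightarrow> t < b \<Longrightarrow> f' t \<ge> 0"
  shows "f a \<le> f b"
  using assms by (intro DERIV_nonneg_imp_increasing_open[of a b f]) auto

lemma exp_lower:
  fixes f f' :: "real \<Rightarrow> real"
  assumes "a \<le> b" "continuous_on {a..b} f"
    and "\<And>t. a < t \<Longrightarrow> t < b \<Longrightarrow> (f has_real_derivative f' t) (at t)"
    and "\<And>t. a < t \<Longrightarrow> t < b \<Longrightarrow> f' t \<ge> - l * f t"
  shows "f b \<ge> exp (- l * (b - a)) * f a"
proof -
  have "(\<lambda>t. exp (l * t) * f t) a \<le> (\<lambda>t. exp (l * t) * f t) b"
  proof (rule mono_deriv[where f="\<lambda>t. exp (l * t) * f t" and f'="\<lambda>t. exp (l*t) * (l * f t + f' t)"])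
    show "continuous_on {a..b} (\<lambda>t. exp (l * t) * f t)"
      by (intro continuous_intros assms)
    fix t assume t: "a < t" "t < b"
    show "((\<lambda>t. exp (l * t) * f t) has_real_derivative exp (l*t) * (l * f t + f' t)) (at t)"
      using assms(3)[OF t] by (auto intro!: derivative_eq_intros simp: algebra_simps)
    show "0 \<le> exp (l*t) * (l * f t + f' t)" using assms(4)[OF t] by simp
  qed (rule assms(1))
  then have "exp (l*a) * f a \<le> exp (l*b) * f b" by simp
  then have "exp (-l*b) * (exp (l*a) * f a) \<le> exp (-l*b) * (exp (l*b) * f b)"
    by (simp add: mult_left_mono)
  moreover have "exp (-l*b) * exp (l*a) = exp (- l * (b - a))"
    by (simp add: exp_add[symmetric] algebra_simps)
  moreover have "exp (-l*b) * exp (l*b) = 1"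
    by (simp add: exp_add[symmetric])
  ultimately show ?thesis by (metis mult.assoc mult_1)
qed

lemma exp_upper:
  fixes f f' :: "real \<Rightarrow> real"
  assumes "a \<le> b" "continuous_on {a..b} f"
    and "\<And>t. a < t \<Longrightarrow> t < b \<Longrightarrow> (f has_real_derivative f' t) (at t)"
    and "\<And>t. a < t \<Longrightarrow> t < b \<Longrightarrow> f' t \<le> - l * f t"
  shows "f b \<le> exp (- l * (b - a)) * f a"
proof -
  have "(\<lambda>t. - f t) b \<ge> exp (- l * (b - a)) * (\<lambda>t. - f t) a"
  proof (rule exp_lower[where f="\<lambda>t. - f t" and f'="\<lambda>t. - f' t"])
    fix t assume t: "a < t" "t < b"
    show "((\<lambda>t. - f t) has_real_derivative - f' t) (at t)"
      using assms(3)[OF t] by (rule derivative_intros)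
    show "- l * - f t \<le> - f' t" using assms(4)[OF t] by simp
  qed (use assms in \<open>auto intro!: continuous_intros\<close>)
  then show ?thesis by simp
qed

lemma aff_lower:
  fixes f f' :: "real \<Rightarrow> real"
  assumes "a \<le> b" "continuous_on {a..b} f"
    and "\<And>t. a < t \<Longrightarrow> t < b \<Longrightarrow> (f has_real_derivative f' t) (at t)"
    and "\<And>t. a < t \<Longrightarrow> t < b \<Longrightarrow> f' t \<ge> - l * f t + m" and "l > 0"
  shows "f b \<ge> m / l + exp (- l * (b - a)) * (f a - m / l)"
proof -
  have "(\<lambda>t. f t - m / l) b \<ge> exp (- l * (b - a)) * (\<lambda>t. f t - m / l) a"
  proof (rule exp_lower[where f="\<lambda>t. f t - m / l" and f'="f'"])
    fix t assume t: "a < t" "t < b"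
    show "((\<lambda>t. f t - m / l) has_real_derivative f' t) (at t)"
      using assms(3)[OF t] by (auto intro!: derivative_eq_intros)
    show "- l * (f t - m / l) \<le> f' t" using assms(4)[OF t] assms(5) by (simp add: algebra_simps)
  qed (use assms in \<open>auto intro!: continuous_intros\<close>)
  then show ?thesis by simp
qed

lemma aff_upper:
  fixes f f' :: "real \<Rightarrow> real"
  assumes "a \<le> b" "continuous_on {a..b} f"
    and "\<And>t. a < t \<Longrightarrow> t < b \<Longrightarrow> (f has_real_derivative f' t) (at t)"
    and "\<And>t. a < t \<Longrightarrow> t < b \<Longrightarrow> f' t \<le> - l * f t + m" and "l > 0"
  shows "f b \<le> m / l + exp (- l * (b - a)) * (f a - m / l)"
proof -
  have "(\<lambda>t. f t - m / l) b \<le> exp (- l * (b - a)) * (\<lambda>t. f t - m / l) a"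
  proof (rule exp_upper[where f="\<lambda>t. f t - m / l" and f'="f'"])
    fix t assume t: "a < t" "t < b"
    show "((\<lambda>t. f t - m / l) has_real_derivative f' t) (at t)"
      using assms(3)[OF t] by (auto intro!: derivative_eq_intros)
    show "f' t \<le> - l * (f t - m / l)" using assms(4)[OF t] assms(5) by (simp add: algebra_simps)
  qed (use assms in \<open>auto intro!: continuous_intros\<close>)
  then show ?thesis by simp
qed

lemma first_cross:
  fixes f :: "real \<Rightarrow> real"
  assumes "a \<le> b" "continuous_on {a..b} f" "f a > 0"
    and "\<And>t. a < t \<Longrightarrow> t \<le> b \<Longrightarrow> f t = 0 \<Longrightarrow> (\<forall>r\<in>{a..<t}. f r > 0) \<Longrightarrow> False"
  shows "\<forall>t\<in>{a..b}. f t > 0"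
proof (rule ccontr)
  assume "\<not> ?thesis"
  then obtain t where t: "t \<in> {a..b}" "f t \<le> 0" by force
  define S where "S = {r\<in>{a..t}. f r \<le> 0}"
  have "closed ({a..t} \<inter> f -` {..0})"
    using t by (intro continuous_closed_preimage continuous_on_subset[OF assms(2)]) auto
  moreover have "S = {a..t} \<inter> f -` {..0}" unfolding S_def by auto
  ultimately have cS: "closed S" by simp
  have ne: "S \<noteq> {}" using t unfolding S_def by auto
  have bS: "bdd_below S" unfolding S_def by (auto intro: bdd_belowI[of _ a])
  define t1 where "t1 = Inf S"
  have t1S: "t1 \<in> S" unfolding t1_def using closed_contains_Inf[OF ne bS cS] .
  have below: "\<forall>r\<in>{a..<t1}. f r > 0"
  proof
    fix r assume r: "r \<in> {a..<t1}"
    show "f r > 0"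
    proof (rule ccontr)
      assume "\<not> f r > 0"
      then have "r \<in> S" using r t1S unfolding S_def by auto
      then have "t1 \<le> r" unfolding t1_def using bS by (simp add: cInf_lower)
      then show False using r by auto
    qed
  qed
  have t1a: "a < t1" using t1S assms(3) unfolding S_def by (cases "t1 = a") auto
  have ct1: "continuous_on {a..t1} f"
    using t1S t unfolding S_def by (auto intro: continuous_on_subset[OF assms(2)])
  have "f t1 = 0"
  proof (rule ccontr)
    assume "f t1 \<noteq> 0"
    then have "f t1 < 0" using t1S unfolding S_def by auto
    then obtain r where r: "a \<le> r" "r \<le> t1" "f r = 0"
      using IVT2'[of f t1 0 a, OF _ _ _ ct1] assms(3) t1a by auto
    then have "r < t1" using \<open>f t1 < 0\<close> by (cases "r = t1") auto
    then have "r \<in> {a..<t1}" using r by auto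
    then have "f r > 0" using below by blast
    then show False using r by auto
  qed
  then show False using assms(4)[OF t1a _ _ below] t1S t unfolding S_def by auto
qed

lemma last_time:
  fixes f :: "real \<Rightarrow> real"
  assumes "a \<le> b" "continuous_on {a..b} f" "f a \<ge> d" "f b < d"
  shows "\<exists>c\<in>{a..<b}. f c = d \<and> (\<forall>r\<in>{c<..b}. f r < d)"
proof -
  define S where "S = {r\<in>{a..b}. f r \<ge> d}"
  have "closed ({a..b} \<inter> f -` {d..})"
    by (intro continuous_closed_preimage assms(2)) auto
  moreover have "S = {a..b} \<inter> f -` {d..}" unfolding S_def by auto
  ultimately have cS: "closed S" by simp
  have ne: "S \<noteq> {}" using assms unfolding S_def by auto
  have bS: "bdd_above S" unfolding S_def by (auto intro: bdd_aboveI[of _ b])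
  define c where "c = Sup S"
  have cS': "c \<in> S" unfolding c_def using closed_contains_Sup[OF ne bS cS] .
  have above: "\<forall>r\<in>{c<..b}. f r < d"
  proof
    fix r assume r: "r \<in> {c<..b}"
    show "f r < d"
    proof (rule ccontr)
      assume "\<not> f r < d"
      then have "r \<in> S" using r cS' unfolding S_def by auto
      then have "r \<le> c" unfolding c_def using bS by (simp add: cSup_upper)
      then show False using r by auto
    qed
  qed
  have cb: "c < b" using cS' assms(4) unfolding S_def by (cases "c = b") auto
  have cc: "continuous_on {c..b} f"
    using cS' unfolding S_def by (auto intro: continuous_on_subset[OF assms(2)])
  have "f c = d"
  proof (rule ccontr)
    assume "f c \<noteq> d"
    then have "f c > d" using cS' unfolding S_def by auto
    then obtain r where r: "c \<le> r" "r \<le> b" "f r = d"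
      using IVT2'[of f b d c, OF _ _ _ cc] assms(4) cb by auto
    then have "c < r" using \<open>f c > d\<close> by (cases "r = c") auto
    then show False using above r by auto
  qed
  then show ?thesis using cb cS' above unfolding S_def by auto
qed

lemma deriv_cross:
  fixes f :: "real \<Rightarrow> real"
  assumes "(f has_real_derivative l) (at t)" "l > 0" "a < t" "\<forall>r\<in>{a..<t}. f r > 0" "f t = 0"
  shows False
proof -
  obtain d where d: "d > 0" "\<forall>h>0. h < d \<longrightarrow> f (t - h) < f t"
    using DERIV_pos_inc_left[OF assms(1,2)] by blast
  define h where "h = min (d/2) ((t-a)/2)"
  have "h > 0" "h < d" using d assms(3) unfolding h_def by auto
  then have "f (t - h) < 0" using d assms(5) by auto
  moreover have "t - h \<in> {a..<t}" using \<open>h>0\<close> assms(3) unfolding h_def by (auto simp: min_def field_simps)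
  ultimately show False using assms(4) by force
qed


definition mu :: "real \<Rightarrow> real \<Rightarrow> real \<Rightarrow> real" where
  "mu s q \<tau> = min ((s-q)/4) (ln (1 + (s-q)/(2*q)) / (\<tau>+1))"

lemma mu_props:
  assumes "0 < q" "q < s" "\<tau> \<ge> 0"
  shows "mu s q \<tau> > 0" "s - mu s q \<tau> - q * exp (mu s q \<tau> * \<tau>) > 0"
proof -
  define d where "d = s - q"
  define L where "L = ln (1 + d/(2*q))"
  have d: "d > 0" using assms unfolding d_def by auto
  have L: "L > 0" unfolding L_def using d assms by (intro ln_gt_zero) auto
  have mu: "mu s q \<tau> = min (d/4) (L/(\<tau>+1))" unfolding mu_def d_def L_def by simp
  show "mu s q \<tau> > 0" unfolding mu using d L assms by auto
  have "mu s q \<tau> * \<tau> \<le> L/(\<tau>+1) * \<tau>" unfolding mu using assms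
    by (intro mult_right_mono) auto
  also have "\<dots> \<le> L" using L assms by (simp add: field_simps)
  finally have "exp (mu s q \<tau> * \<tau>) \<le> exp L" by simp
  also have "exp L = 1 + d/(2*q)" unfolding L_def using d assms by (intro exp_ln) (auto intro: add_pos_pos)
  finally have "q * exp (mu s q \<tau> * \<tau>) \<le> q * (1 + d/(2*q))" using assms by (intro mult_left_mono) auto
  also have "\<dots> = q + d/2" using assms by (simp add: field_simps)
  finally have "q * exp (mu s q \<tau> * \<tau>) \<le> q + d/2" .
  moreover have "mu s q \<tau> \<le> d/4" unfolding mu by (rule min.cobounded1)
  ultimately show "s - mu s q \<tau> - q * exp (mu s q \<tau> * \<tau>) > 0" using d unfolding d_def
    by argo
qed

lemma decay:
  fixes y y' :: "real \<Rightarrow> real"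
  assumes "0 < q" "q < s" "\<tau> \<ge> 0" "B > 0" "a \<le> b"
    and cont: "continuous_on {a..b} y"
    and init: "\<And>r. a \<le> r \<Longrightarrow> r \<le> a + \<tau> \<Longrightarrow> y r \<le> B"
    and der: "\<And>r. a + \<tau> < r \<Longrightarrow> r \<le> b \<Longrightarrow> (y has_real_derivative y' r) (at r)"
    and ineq: "\<And>r. a + \<tau> < r \<Longrightarrow> r \<le> b \<Longrightarrow> y' r \<le> - s * y r + q * y (r - \<tau>)"
  shows "\<forall>r\<in>{a..b}. y r < 2 * B * exp (- mu s q \<tau> * (r - a - \<tau>))"
proof -
  define m where "m = mu s q \<tau>"
  have m: "m > 0" "s - m - q * exp (m * \<tau>) > 0" using mu_props[OF assms(1-3)] unfolding m_def by auto
  define z where "z r = 2 * B * exp (- m * (r - a - \<tau>))" for r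
  define f where "f r = z r - y r" for r
  have zge: "z r \<ge> 2 * B" if "r \<le> a + \<tau>" for r
  proof -
    have "(- m) * (r - a - \<tau>) \<ge> 0" using that m by (intro mult_nonpos_nonpos) auto
    then have "exp (- m * (r - a - \<tau>)) \<ge> 1" by simp
    then show ?thesis unfolding z_def using assms(4) by simp
  qed
  have zsh: "z (r - \<tau>) = z r * exp (m * \<tau>)" for r
    unfolding z_def by (simp add: mult.assoc exp_add[symmetric] algebra_simps)
  have "\<forall>t\<in>{a..b}. f t > 0"
  proof (rule first_cross)
    show "a \<le> b" by fact
    show "continuous_on {a..b} f" unfolding f_def z_def by (intro continuous_intros cont)
    have "y a \<le> B" using init[of a] assms(3) by simp
    moreover have "z a \<ge> 2 * B" using zge[of a] assms(3) by simp
    ultimately show "f a > 0" unfolding f_def using assms(4) by auto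
    fix t assume t: "a < t" "t \<le> b" "f t = 0" and below: "\<forall>r\<in>{a..<t}. f r > 0"
    show False
    proof (cases "t \<le> a + \<tau>")
      case True
      then show False using zge[of t] init[of t] t assms(4) unfolding f_def by auto
    next
      case False
      have "f (t - \<tau>) \<ge> 0"
      proof (cases "\<tau> = 0")
        case True then show ?thesis using t by simp
      next
        case False
        then have "t - \<tau> \<in> {a..<t}" using \<open>\<not> t \<le> a + \<tau>\<close> assms(3) by auto
        then show ?thesis using below by fastforce
      qed
      then have yt: "y (t - \<tau>) \<le> z t * exp (m * \<tau>)" unfolding f_def zsh by simp
      have ytt: "y t = z t" using t unfolding f_def by simp
      have zpos: "z t > 0" unfolding z_def using assms(4) by simp
      have D: "(f has_real_derivative (- m * z t - y' t)) (at t)"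
        unfolding f_def z_def using der[of t] False t
        by (auto intro!: derivative_eq_intros simp: algebra_simps)
      have "q*y(t-\<tau>) \<le> q*(z t * exp(m*\<tau>))" using yt assms(1) by (intro mult_left_mono) auto
      then have "- m * z t - y' t \<ge> z t * (s - m - q * exp (m * \<tau>))"
        using ineq[of t] False t ytt by (simp add: algebra_simps)
      moreover have "z t * (s - m - q * exp (m * \<tau>)) > 0" using zpos m by simp
      ultimately have "- m * z t - y' t > 0" by linarith
      then show False using deriv_cross[OF D _ t(1) below t(3)] by simp
    qed
  qed
  then show ?thesis unfolding f_def z_def m_def by auto
qed

definition nu :: "real \<Rightarrow> real \<Rightarrow> real \<Rightarrow> real" where
  "nu s q \<tau> = min (s*(q-1)/4) (ln (2*q/(q+1)) / (\<tau>+1))"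

lemma nu_props:
  assumes "s > 0" "q > 1" "\<tau> \<ge> 0"
  shows "nu s q \<tau> > 0" "s * q * exp (- nu s q \<tau> * \<tau>) - s - nu s q \<tau> > 0"
proof -
  define L where "L = ln (2*q/(q+1))"
  have L: "L > 0" unfolding L_def using assms by (intro ln_gt_zero) (auto simp: field_simps)
  have nu: "nu s q \<tau> = min (s*(q-1)/4) (L/(\<tau>+1))" unfolding nu_def L_def by simp
  show "nu s q \<tau> > 0" unfolding nu using L assms by auto
  have "nu s q \<tau> * \<tau> \<le> L/(\<tau>+1) * \<tau>" unfolding nu using assms
    by (intro mult_right_mono) auto
  also have "\<dots> \<le> L" using L assms by (simp add: field_simps)
  finally have "exp (nu s q \<tau> * \<tau>) \<le> exp L" by simp
  also have "exp L = 2*q/(q+1)" unfolding L_def using assms by (intro exp_ln) auto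
  finally have e1: "exp (nu s q \<tau> * \<tau>) \<le> 2*q/(q+1)" .
  have "exp (- nu s q \<tau> * \<tau>) = 1 / exp (nu s q \<tau> * \<tau>)" by (simp add: exp_minus field_simps)
  also have "\<dots> \<ge> 1 / (2*q/(q+1))"
    using e1 assms by (intro divide_left_mono) (auto intro!: mult_pos_pos divide_pos_pos)
  finally have "exp (- nu s q \<tau> * \<tau>) \<ge> (q+1)/(2*q)" by simp
  then have "s * q * exp (- nu s q \<tau> * \<tau>) \<ge> s * q * ((q+1)/(2*q))"
    using assms by (intro mult_left_mono) auto
  also have "s * q * ((q+1)/(2*q)) = s + s*(q-1)/2" using assms by (simp add: field_simps)
  finally have "s * q * exp (- nu s q \<tau> * \<tau>) \<ge> s + s*(q-1)/2" .
  moreover have "nu s q \<tau> \<le> s*(q-1)/4" unfolding nu by (rule min.cobounded1)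
  moreover have "s*(q-1) > 0" using assms by simp
  ultimately show "s * q * exp (- nu s q \<tau> * \<tau>) - s - nu s q \<tau> > 0" by linarith
qed

lemma growth:
  fixes y y' :: "real \<Rightarrow> real"
  assumes "s > 0" "q > 1" "\<tau> \<ge> 0" "m > 0" "a \<le> b"
    and cont: "continuous_on {a..b} y"
    and init: "\<And>r. a - \<tau> \<le> r \<Longrightarrow> r \<le> a \<Longrightarrow> y r > m"
    and der: "\<And>r. a < r \<Longrightarrow> r \<le> b \<Longrightarrow> (y has_real_derivative y' r) (at r)"
    and ineq: "\<And>r. a < r \<Longrightarrow> r \<le> b \<Longrightarrow> y' r \<ge> - s * y r + s * q * y (r - \<tau>)"
  shows "\<forall>r\<in>{a..b}. y r > m * exp (nu s q \<tau> * (r - a))"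
proof -
  define n where "n = nu s q \<tau>"
  have n: "n > 0" "s * q * exp (- n * \<tau>) - s - n > 0" using nu_props[OF assms(1-3)] unfolding n_def by auto
  define z where "z r = m * exp (n * (r - a))" for r
  define f where "f r = y r - z r" for r
  have zle: "z r \<le> m" if "r \<le> a" for r
  proof -
    have "n * (r - a) \<le> 0" using that n by (intro mult_nonneg_nonpos) auto
    then have "exp (n * (r - a)) \<le> 1" by simp
    then show ?thesis unfolding z_def using assms(4) by simp
  qed
  have zsh: "z (r - \<tau>) = z r * exp (- n * \<tau>)" for r
    unfolding z_def by (simp add: mult.assoc exp_add[symmetric] algebra_simps)
  have "\<forall>t\<in>{a..b}. f t > 0"
  proof (rule first_cross)
    show "a \<le> b" by fact
    show "continuous_on {a..b} f" unfolding f_def z_def by (intro continuous_intros cont)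
    have "y a > m" using init[of a] assms(3) by simp
    then show "f a > 0" unfolding f_def using zle[of a] by auto
    fix t assume t: "a < t" "t \<le> b" "f t = 0" and below: "\<forall>r\<in>{a..<t}. f r > 0"
    have "y (t - \<tau>) \<ge> z (t - \<tau>)"
    proof (cases "t - \<tau> < a")
      case True then show ?thesis using zle[of "t - \<tau>"] init[of "t - \<tau>"] t by auto
    next
      case False
      show ?thesis
      proof (cases "\<tau> = 0")
        case True then show ?thesis using t unfolding f_def by simp
      next
        case F2: False
        then have "t - \<tau> \<in> {a..<t}" using False assms(3) by auto
        then have "f (t - \<tau>) > 0" using below by blast
        then show ?thesis unfolding f_def by simp
      qed
    qed
    then have yt: "y (t - \<tau>) \<ge> z t * exp (- n * \<tau>)" unfolding zsh by simp
    have ytt: "y t = z t" using t unfolding f_def by simp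
    have zpos: "z t > 0" unfolding z_def using assms(4) by simp
    have D: "(f has_real_derivative (y' t - n * z t)) (at t)"
      unfolding f_def z_def using der[of t] t
      by (auto intro!: derivative_eq_intros simp: algebra_simps)
    have "s*q*y(t-\<tau>) \<ge> s*q*(z t * exp(-n*\<tau>))" using yt assms(1,2) by (intro mult_left_mono) auto
    then have "y' t - n * z t \<ge> z t * (s * q * exp (- n * \<tau>) - s - n)"
      using ineq[of t] t ytt by (simp add: algebra_simps)
    moreover have "z t * (s * q * exp (- n * \<tau>) - s - n) > 0" using zpos n by simp
    ultimately have "y' t - n * z t > 0" by linarith
    then show False using deriv_cross[OF D _ t(1) below t(3)] by simp
  qed
  then show ?thesis unfolding f_def z_def n_def by auto
qed

locale sol =
  fixes s Y \<tau> :: real and \<phi> \<psi> x y :: "real \<Rightarrow> real"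
  assumes s_pos: "s > 0" and Y_pos: "Y > 0" and tau_nn: "\<tau> \<ge> 0"
    and sol: "is_solution s Y \<tau> \<phi> \<psi> x y"
    and init_nn: "\<forall>\<theta>\<in>{-\<tau>..0}. \<phi> \<theta> \<ge> 0 \<and> \<psi> \<theta> \<ge> 0"
    and x0: "\<phi> 0 > 0"
begin

definition cc where "cc = Y * exp (- s * \<tau>)"

lemma cc_pos: "cc > 0" unfolding cc_def using Y_pos by simp

lemma init: "-\<tau> \<le> \<theta> \<Longrightarrow> \<theta> \<le> 0 \<Longrightarrow> x \<theta> = \<phi> \<theta> \<and> y \<theta> = \<psi> \<theta>"
  using sol unfolding is_solution_def by auto

lemma contx: "continuous_on {-\<tau>..} x" and conty: "continuous_on {-\<tau>..} y"
  using sol unfolding is_solution_def by auto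

lemma contx': "-\<tau> \<le> a \<Longrightarrow> continuous_on {a..b} x"
  by (rule continuous_on_subset[OF contx]) auto
lemma conty': "-\<tau> \<le> a \<Longrightarrow> continuous_on {a..b} y"
  by (rule continuous_on_subset[OF conty]) auto

lemma dx_within: "t \<ge> 0 \<Longrightarrow> (x has_real_derivative (x t * (1 - x t) - y t * x t)) (at t within {0..})"
  using sol unfolding is_solution_def rhs_x_def by auto

lemma dy_within: "t \<ge> 0 \<Longrightarrow> (y has_real_derivative (- s * y t + cc * y (t - \<tau>) * x (t - \<tau>))) (at t within {0..})"
  using sol unfolding is_solution_def rhs_y_def cc_def by auto

lemma dx: "t > 0 \<Longrightarrow> (x has_real_derivative (x t * (1 - x t) - y t * x t)) (at t)"
proof -
  assume t: "t > 0"
  have "at t within {0..} = at t" using t by (intro at_within_interior) auto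
  then show ?thesis using dx_within[of t] t by simp
qed

lemma dy: "t > 0 \<Longrightarrow> (y has_real_derivative (- s * y t + cc * y (t - \<tau>) * x (t - \<tau>))) (at t)"
proof -
  assume t: "t > 0"
  have "at t within {0..} = at t" using t by (intro at_within_interior) auto
  then show ?thesis using dy_within[of t] t by simp
qed

lemma x_pos: "t \<ge> 0 \<Longrightarrow> x t > 0"
proof -
  assume t: "t \<ge> 0"
  have "\<forall>r\<in>{0..t}. x r > 0"
  proof (rule first_cross)
    show "0 \<le> t" by fact
    show "continuous_on {0..t} x" using tau_nn by (intro contx') auto
    show "x 0 > 0" using init[of 0] x0 tau_nn by auto
    fix t1 assume t1: "0 < t1" "t1 \<le> t" "x t1 = 0" and below: "\<forall>r\<in>{0..<t1}. x r > 0"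
    define g where "g r = 1 - x r - y r" for r
    have cg: "continuous_on {0..t1} g" unfolding g_def using tau_nn
      by (intro continuous_intros contx' conty') auto
    obtain tm where tm: "tm \<in> {0..t1}" "\<forall>r\<in>{0..t1}. g tm \<le> g r"
      using continuous_attains_inf[OF _ _ cg] t1 by auto
    have "x t1 \<ge> exp (- (- g tm) * (t1 - 0)) * x 0"
    proof (rule exp_lower[where f' = "\<lambda>r. x r * (1 - x r) - y r * x r"])
      show "continuous_on {0..t1} x" using tau_nn by (intro contx') auto
      fix r assume r: "0 < r" "r < t1"
      show "(x has_real_derivative x r * (1 - x r) - y r * x r) (at r)" using dx r by auto
      have "x r > 0" using below r by auto
      moreover have "g r \<ge> g tm" using tm r by auto
      ultimately have "x r * g r \<ge> x r * g tm" by (intro mult_left_mono) auto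
      then show "- (- g tm) * x r \<le> x r * (1 - x r) - y r * x r"
        unfolding g_def by (simp add: algebra_simps)
    qed (use t1 in auto)
    moreover have "exp (- (- g tm) * (t1 - 0)) * x 0 > 0" using init[of 0] x0 tau_nn by auto
    ultimately show False using t1 by auto
  qed
  then show ?thesis using t by auto
qed

lemma x_nn: "t \<ge> -\<tau> \<Longrightarrow> x t \<ge> 0"
  using x_pos[of t] init[of t] init_nn by (cases "t \<le> 0") force+

lemma y_nn: "t \<ge> -\<tau> \<Longrightarrow> y t \<ge> 0"
proof -
  assume t: "t \<ge> -\<tau>"
  show ?thesis
  proof (cases "t \<le> 0")
    case True then show ?thesis using init[of t] init_nn t by force
  next
    case False
    then have T: "t > 0" by simp
    have cx: "continuous_on {-\<tau>..t} x" by (intro contx') auto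
    obtain tM where tM: "tM \<in> {-\<tau>..t}" "\<forall>r\<in>{-\<tau>..t}. x r \<le> x tM"
      using continuous_attains_sup[OF _ _ cx] T tau_nn by auto
    define X where "X = x tM"
    have X: "X \<ge> 0" unfolding X_def using x_nn tM by auto
    define P where "P = cc * X"
    have P: "P \<ge> 0" unfolding P_def using X cc_pos by simp
    have key: "y t + e * exp (P * t) > 0" if e: "e > 0" for e
    proof -
      define f where "f r = y r + e * exp (P * r)" for r
      have "\<forall>r\<in>{0..t}. f r > 0"
      proof (rule first_cross)
        show "0 \<le> t" using T by simp
        show "continuous_on {0..t} f" unfolding f_def using tau_nn
          by (intro continuous_intros conty') auto
        have "y 0 \<ge> 0" using init[of 0] init_nn tau_nn by force
        then show "f 0 > 0" unfolding f_def using e by (smt (verit) exp_gt_zero mult_pos_pos)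
        fix t1 assume t1: "0 < t1" "t1 \<le> t" "f t1 = 0" and below: "\<forall>r\<in>{0..<t1}. f r > 0"
        define E where "E = exp (P * t1)"
        have E: "E > 0" unfolding E_def by simp
        have yt1: "y t1 = - e * E" using t1 unfolding f_def E_def by simp
        have ytau: "y (t1 - \<tau>) \<ge> - e * E"
        proof (cases "t1 - \<tau> \<le> 0")
          case True
          then have "y (t1 - \<tau>) \<ge> 0" using init[of "t1-\<tau>"] init_nn t1 by force
          moreover have "e * E > 0" using e E by simp
          ultimately show ?thesis by linarith
        next
          case False
          show ?thesis
          proof (cases "\<tau> = 0")
            case True then show ?thesis using yt1 by simp
          next
            case F2: False
            then have "t1 - \<tau> \<in> {0..<t1}" using False tau_nn by auto
            then have "f (t1 - \<tau>) > 0" using below by blast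
            then have "y (t1 - \<tau>) > - e * exp (P * (t1 - \<tau>))" unfolding f_def by simp
            moreover have "exp (P * (t1 - \<tau>)) \<le> E" unfolding E_def using P tau_nn
              by (simp add: mult_left_mono algebra_simps)
            moreover have "e * exp (P * (t1 - \<tau>)) \<le> e * E"
              using \<open>exp (P * (t1 - \<tau>)) \<le> E\<close> e by (intro mult_left_mono) auto
            ultimately show ?thesis by linarith
          qed
        qed
        have xr: "0 \<le> x (t1 - \<tau>)" "x (t1 - \<tau>) \<le> X"
          using x_nn[of "t1 - \<tau>"] tM(2) t1 tau_nn unfolding X_def by auto
        have prod: "y (t1 - \<tau>) * x (t1 - \<tau>) \<ge> - e * E * X"
        proof (cases "y (t1 - \<tau>) \<ge> 0")
          case True
          then have "y (t1 - \<tau>) * x (t1 - \<tau>) \<ge> 0" using xr by simp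
          moreover have "e * E * X \<ge> 0" using e E X by simp
          ultimately show ?thesis by linarith
        next
          case False
          then have "y (t1 - \<tau>) * x (t1 - \<tau>) \<ge> y (t1 - \<tau>) * X"
            using xr by (intro mult_left_mono_neg) auto
          moreover have "y (t1 - \<tau>) * X \<ge> - e * E * X" using ytau X
            by (intro mult_right_mono) auto
          ultimately show ?thesis by linarith
        qed
        have D: "(f has_real_derivative (- s * y t1 + cc * y (t1 - \<tau>) * x (t1 - \<tau>) + e * (P * E))) (at t1)"
          unfolding f_def E_def using dy[of t1] t1
          by (auto intro!: derivative_eq_intros)
        have "cc * y (t1 - \<tau>) * x (t1 - \<tau>) \<ge> - cc * (e * E * X)"
        proof -
          have "cc * (y (t1 - \<tau>) * x (t1 - \<tau>)) \<ge> cc * (- e * E * X)"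
            using prod cc_pos by (intro mult_left_mono) auto
          then show ?thesis by (simp add: mult.assoc)
        qed
        then have "- s * y t1 + cc * y (t1 - \<tau>) * x (t1 - \<tau>) + e * (P * E) \<ge> s * e * E"
          unfolding yt1 P_def by (simp add: algebra_simps)
        moreover have "s * e * E > 0" using s_pos e E by simp
        ultimately show False
          using deriv_cross[OF D _ t1(1) below t1(3)] by linarith
      qed
      then have "f t > 0" using T by simp
      then show ?thesis unfolding f_def .
    qed
    show ?thesis
    proof (rule ccontr)
      assume neg: "\<not> y t \<ge> 0"
      define e where "e = - y t / (2 * exp (P * t))"
      have "e > 0" unfolding e_def using neg by (intro divide_pos_pos) auto
      have "e * exp (P * t) = - y t / 2" unfolding e_def by simp
      then show False using key[OF \<open>e > 0\<close>] neg by linarith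
    qed
  qed
qed

lemma h_nn: "t \<ge> 0 \<Longrightarrow> cc * y (t - \<tau>) * x (t - \<tau>) \<ge> 0"
  using y_nn[of "t - \<tau>"] x_nn[of "t - \<tau>"] cc_pos by (simp add: tau_nn)


lemma x_upper: "t > 0 \<Longrightarrow> x t \<le> 1 / (1 - exp (-t))"
proof -
  assume t: "t > 0"
  define u where "u r = 1 / x r" for r
  have nz: "\<forall>r\<in>{0..t}. x r \<noteq> 0" using x_pos by force
  have cu: "continuous_on {0..t} u" unfolding u_def
    using nz tau_nn by (intro continuous_on_divide continuous_on_const contx') auto
  have "u t \<ge> 1 / 1 + exp (- 1 * (t - 0)) * (u 0 - 1 / 1)"
  proof (rule aff_lower[where f' = "\<lambda>r. - (x r * (1 - x r) - y r * x r) / (x r)^2"])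
    fix r assume r: "0 < r" "r < t"
    have xr: "x r > 0" using x_pos r by simp
    show "(u has_real_derivative - (x r * (1 - x r) - y r * x r) / (x r)\<^sup>2) (at r)"
      unfolding u_def using dx[of r] r xr
      by (auto intro!: derivative_eq_intros simp: field_simps power2_eq_square)
    have e: "- (x r * (1 - x r) - y r * x r) / (x r)^2 = -1 * u r + 1 + y r / x r"
      unfolding u_def using xr by (simp add: field_simps power2_eq_square)
    have "y r / x r \<ge> 0" using y_nn[of r] xr r tau_nn by simp
    then show "- 1 * u r + 1 \<le> - (x r * (1 - x r) - y r * x r) / (x r)\<^sup>2" unfolding e by simp
  qed (use t cu in auto)
  moreover have "u 0 * exp (-t) > 0" unfolding u_def using x_pos[of 0] by simp
  ultimately have "u t \<ge> 1 - exp (-t)" by (simp add: algebra_simps)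
  moreover have "1 - exp (-t) > 0" using t by simp
  ultimately have "1 / u t \<le> 1 / (1 - exp (-t))"
    by (meson divide_left_mono dual_order.strict_trans1 mult_pos_pos zero_le_one)
  moreover have "1 / u t = x t" unfolding u_def by simp
  ultimately show ?thesis by simp
qed

lemma x_ev_le: "e > 0 \<Longrightarrow> \<exists>T\<ge>1. \<forall>t\<ge>T. x t \<le> 1 + e"
proof -
  assume e: "e > 0"
  define T where "T = max 1 (ln ((1+e)/e))"
  have "\<forall>t\<ge>T. x t \<le> 1 + e"
  proof (intro allI impI)
    fix t assume t: "t \<ge> T"
    then have t1: "t \<ge> 1" "t \<ge> ln ((1+e)/e)" unfolding T_def by auto
    have "exp (-t) \<le> exp (- ln ((1+e)/e))" using t1 by simp
    also have "\<dots> = e / (1+e)" using e by (simp add: exp_minus field_simps)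
    finally have "1 - exp (-t) \<ge> 1 / (1 + e)" using e by (simp add: field_simps)
    moreover have "1 / (1+e) > 0" using e by simp
    moreover have "1 - exp (-t) > 0" using t1 by simp
    ultimately have "1 / (1 - exp (-t)) \<le> 1 / (1 / (1+e))" by (intro divide_left_mono) auto
    then show "x t \<le> 1 + e" using x_upper[of t] t1 by simp
  qed
  then show ?thesis unfolding T_def by (intro exI[of _ T]) (auto simp: T_def)
qed

lemma x_shift_deriv: "r > \<tau> \<Longrightarrow> ((\<lambda>r. x (r - \<tau>)) has_real_derivative
    (x (r - \<tau>) * (1 - x (r - \<tau>)) - y (r - \<tau>) * x (r - \<tau>))) (at r)"
  using DERIV_shift[of x _ r "-\<tau>"] dx[of "r - \<tau>"] by simp

lemma x_shift_cont: "\<tau> \<le> a \<Longrightarrow> continuous_on {a..b} (\<lambda>r. x (r - \<tau>))"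
  using tau_nn by (intro continuous_on_compose2[OF contx]) (auto intro!: continuous_intros)

definition Bc where "Bc = cc * (1 + s) ^ 2 / (4 * s) + 1"

lemma Bc_ge: "Bc \<ge> 1" unfolding Bc_def using cc_pos s_pos by simp

lemma y_ev_bound: "\<exists>T. \<forall>t\<ge>T. y t \<le> Bc"
proof -
  define C where "C = cc * (1+s)^2 / 4"
  define U where "U r = cc * x (r - \<tau>) + y r" for r
  define A where "A = \<bar>U \<tau> - C / s\<bar>"
  have "\<forall>t\<ge>\<tau> + A / s. y t \<le> Bc"
  proof (intro allI impI)
    fix t assume t: "t \<ge> \<tau> + A / s"
    have A: "A \<ge> 0" unfolding A_def by simp
    then have tt: "t \<ge> \<tau>" using t s_pos by (smt (verit) divide_nonneg_pos)
    have "U t \<le> C / s + exp (- s * (t - \<tau>)) * (U \<tau> - C / s)"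
    proof (rule aff_upper[where f' = "\<lambda>r. cc * (x (r - \<tau>) * (1 - x (r - \<tau>)) - y (r - \<tau>) * x (r - \<tau>))
          + (- s * y r + cc * y (r - \<tau>) * x (r - \<tau>))"])
      show "continuous_on {\<tau>..t} U" unfolding U_def using tau_nn
        by (intro continuous_intros x_shift_cont conty') auto
      fix r assume r: "\<tau> < r" "r < t"
      show "(U has_real_derivative cc * (x (r - \<tau>) * (1 - x (r - \<tau>)) - y (r - \<tau>) * x (r - \<tau>))
          + (- s * y r + cc * y (r - \<tau>) * x (r - \<tau>))) (at r)"
      proof -
        have "((\<lambda>z. cc * x (z - \<tau>)) has_real_derivative cc * (x (r - \<tau>) * (1 - x (r - \<tau>)) - y (r - \<tau>) * x (r - \<tau>))) (at r)"
          using DERIV_cmult[OF x_shift_deriv[of r]] r by simp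
        moreover have "(y has_real_derivative (- s * y r + cc * y (r - \<tau>) * x (r - \<tau>))) (at r)"
          using dy[of r] r tau_nn by simp
        ultimately show ?thesis unfolding U_def by (rule DERIV_add)
      qed
      define z where "z = x (r - \<tau>)"
      have "(1+s)^2/4 - z*(1+s-z) = (z - (1+s)/2)^2" by (simp add: power2_eq_square field_simps)
      then have "z*(1+s-z) \<le> (1+s)^2/4" by (smt (verit) zero_le_power2)
      then have "cc * (z*(1+s-z)) \<le> cc * ((1+s)^2/4)" using cc_pos by (intro mult_left_mono) auto
      then show "cc * (x (r - \<tau>) * (1 - x (r - \<tau>)) - y (r - \<tau>) * x (r - \<tau>))
          + (- s * y r + cc * y (r - \<tau>) * x (r - \<tau>)) \<le> - s * U r + C"
        unfolding U_def C_def z_def by (simp add: algebra_simps)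
    qed (use tt s_pos in auto)
    moreover have "exp (- s * (t - \<tau>)) * (U \<tau> - C / s) \<le> 1"
    proof -
      have "exp (s * (t - \<tau>)) \<ge> 1 + s * (t - \<tau>)" by (rule exp_ge_add_one_self)
      moreover have "s * (t - \<tau>) \<ge> A" using t s_pos by (simp add: field_simps)
      ultimately have "A \<le> exp (s * (t - \<tau>))" by linarith
      then have "A / exp (s * (t - \<tau>)) \<le> 1" by simp
      moreover have "exp (- s * (t - \<tau>)) * A = A / exp (s * (t - \<tau>))"
        by (simp add: exp_minus divide_inverse)
      ultimately have "exp (- s * (t - \<tau>)) * A \<le> 1" by simp
      moreover have "U \<tau> - C / s \<le> A" unfolding A_def by simp
      ultimately show ?thesis by (smt (verit) exp_gt_zero mult_left_mono)
    qed
    moreover have "y t \<le> U t" unfolding U_def using x_nn[of "t - \<tau>"] cc_pos tt tau_nn by simp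
    ultimately show "y t \<le> Bc" unfolding Bc_def C_def by (simp add: field_simps)
  qed
  then show ?thesis by blast
qed

lemma y_pos_after: "t0 \<ge> 0 \<Longrightarrow> y t0 > 0 \<Longrightarrow> t \<ge> t0 \<Longrightarrow> y t > 0"
proof -
  assume t0: "t0 \<ge> 0" "y t0 > 0" and t: "t \<ge> t0"
  have "y t \<ge> exp (- s * (t - t0)) * y t0"
  proof (rule exp_lower[where f' = "\<lambda>r. - s * y r + cc * y (r - \<tau>) * x (r - \<tau>)"])
    show "continuous_on {t0..t} y" using t0 tau_nn by (intro conty') auto
    fix r assume r: "t0 < r" "r < t"
    show "(y has_real_derivative - s * y r + cc * y (r - \<tau>) * x (r - \<tau>)) (at r)"
      using dy[of r] r t0 by simp
    show "- s * y r \<le> - s * y r + cc * y (r - \<tau>) * x (r - \<tau>)"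
      using h_nn[of r] r t0 by simp
  qed (use t in auto)
  moreover have "exp (- s * (t - t0)) * y t0 > 0" using t0 by simp
  ultimately show ?thesis by linarith
qed

lemma y_ev_pos:
  assumes "\<theta> \<in> {-\<tau>..0}" "\<phi> \<theta> * \<psi> \<theta> > 0"
  shows "\<exists>t0\<ge>0. \<forall>t\<ge>t0. y t > 0"
proof -
  define r0 where "r0 = \<theta> + \<tau>"
  have r0: "r0 \<ge> 0" using assms unfolding r0_def by auto
  have h: "cc * y (r0 - \<tau>) * x (r0 - \<tau>) > 0"
  proof -
    have "\<psi> \<theta> * \<phi> \<theta> > 0" using assms(2) by (simp add: mult.commute)
    then show ?thesis using assms init[of \<theta>] cc_pos unfolding r0_def by (auto simp: mult.assoc)
  qed
  obtain t0 where t0: "t0 \<ge> 0" "y t0 > 0"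
  proof (cases "y r0 > 0")
    case True then show ?thesis using that r0 by blast
  next
    case False
    then have y0: "y r0 = 0" using y_nn[of r0] r0 tau_nn by simp
    have "(y has_real_derivative (- s * y r0 + cc * y (r0 - \<tau>) * x (r0 - \<tau>))) (at r0 within {0..})"
      using dy_within r0 by simp
    then obtain d where d: "d > 0" "\<forall>h>0. r0 + h \<in> {0..} \<longrightarrow> h < d \<longrightarrow> y r0 < y (r0 + h)"
      using has_real_derivative_pos_inc_right[of y _ r0 "{0..}"] h y0 by auto
    then have "y (r0 + d/2) > 0" using y0 r0 by auto
    then show ?thesis using that r0 d by (meson add_nonneg_nonneg half_gt_zero less_imp_le)
  qed
  then show ?thesis using y_pos_after by blast
qed

end

lemma exp_neg_div: "exp (- a * b) * c = c / exp (a * b :: real)"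
proof -
  have "exp (- a * b) = inverse (exp (a * b))" by (simp add: exp_minus[symmetric])
  then show ?thesis by (simp add: divide_inverse mult.commute)
qed

context sol
begin

lemma y_lower: "0 \<le> a \<Longrightarrow> a \<le> t \<Longrightarrow> y t \<ge> exp (- s * (t - a)) * y a"
proof -
  assume a: "0 \<le> a" "a \<le> t"
  show ?thesis
  proof (rule exp_lower[where f' = "\<lambda>r. - s * y r + cc * y (r - \<tau>) * x (r - \<tau>)"])
    show "continuous_on {a..t} y" using a tau_nn by (intro conty') auto
    fix r assume r: "a < r" "r < t"
    show "(y has_real_derivative - s * y r + cc * y (r - \<tau>) * x (r - \<tau>)) (at r)"
      using dy[of r] r a by simp
    show "- s * y r \<le> - s * y r + cc * y (r - \<tau>) * x (r - \<tau>)"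
      using h_nn[of r] r a by simp
  qed (use a in auto)
qed

lemma x_lower_from_y:
  assumes "t1 \<ge> 0" "0 < \<eta>" "\<eta> < 1" "\<forall>r\<in>{t1..t}. y r \<le> \<eta>" "t1 \<le> t"
  shows "1 / x t \<le> 1 / (1 - \<eta>) + exp (- (1 - \<eta>) * (t - t1)) * (1 / x t1)"
proof -
  define u where "u r = 1 / x r" for r
  have nz: "\<forall>r\<in>{t1..t}. x r \<noteq> 0"
  proof
    fix r assume "r \<in> {t1..t}"
    then have "r \<ge> 0" using assms(1) by auto
    then show "x r \<noteq> 0" using x_pos[of r] by simp
  qed
  have cu: "continuous_on {t1..t} u" unfolding u_def
    using nz tau_nn assms(1) by (intro continuous_on_divide continuous_on_const contx') auto
  have "u t \<le> 1 / (1 - \<eta>) + exp (- (1 - \<eta>) * (t - t1)) * (u t1 - 1 / (1 - \<eta>))"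
  proof (rule aff_upper[where f' = "\<lambda>r. - (x r * (1 - x r) - y r * x r) / (x r)^2"])
    fix r assume r: "t1 < r" "r < t"
    have xr: "x r > 0" using x_pos r assms(1) by simp
    show "(u has_real_derivative - (x r * (1 - x r) - y r * x r) / (x r)\<^sup>2) (at r)"
      unfolding u_def using dx[of r] r xr assms(1)
      by (auto intro!: derivative_eq_intros simp: field_simps power2_eq_square)
    have e: "- (x r * (1 - x r) - y r * x r) / (x r)^2 = -1 * u r + 1 + y r * u r"
      unfolding u_def using xr by (simp add: field_simps power2_eq_square)
    have "y r * u r \<le> \<eta> * u r" using assms(4) r xr unfolding u_def
      by (intro mult_right_mono) auto
    then show "- (x r * (1 - x r) - y r * x r) / (x r)\<^sup>2 \<le> - (1 - \<eta>) * u r + 1" unfolding e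
      by (simp add: algebra_simps)
  qed (use assms cu in auto)
  moreover have "exp (- (1 - \<eta>) * (t - t1)) * (1 / (1 - \<eta>)) \<ge> 0" using assms by simp
  ultimately show ?thesis unfolding u_def by (simp add: algebra_simps)
qed

lemma conv_E1:
  assumes cs: "cc < s"
  shows "(x \<longlongrightarrow> 1) at_top \<and> (y \<longlongrightarrow> 0) at_top"
proof -
  define q where "q = (s + cc) / 2"
  define e2 where "e2 = (s - cc) / (2 * cc)"
  have q: "0 < q" "q < s" unfolding q_def using cs cc_pos by auto
  have e2: "e2 > 0" unfolding e2_def using cs cc_pos by simp
  have cce2: "cc * (1 + e2) = q" unfolding e2_def q_def using cc_pos by (simp add: field_simps)
  obtain T where T: "T \<ge> 1" "\<forall>t\<ge>T. x t \<le> 1 + e2" using x_ev_le[OF e2] by auto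
  have cy: "continuous_on {T..T+\<tau>} y" using T tau_nn by (intro conty') auto
  obtain tM where tM: "tM \<in> {T..T+\<tau>}" "\<forall>r\<in>{T..T+\<tau>}. y r \<le> y tM"
    using continuous_attains_sup[OF _ _ cy] tau_nn by auto
  define B where "B = \<bar>y tM\<bar> + 1"
  have B: "B > 0" unfolding B_def by simp
  define m where "m = mu s q \<tau>"
  have m: "m > 0" unfolding m_def using mu_props q tau_nn by auto
  have ybound: "y t < 2 * B * exp (- m * (t - T - \<tau>))" if t: "t \<ge> T" for t
  proof -
    have "\<forall>r\<in>{T..t}. y r < 2 * B * exp (- mu s q \<tau> * (r - T - \<tau>))"
    proof (rule decay[where y' = "\<lambda>r. - s * y r + cc * y (r - \<tau>) * x (r - \<tau>)"])
      show "continuous_on {T..t} y" using T tau_nn by (intro conty') auto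
      fix r assume r: "T \<le> r" "r \<le> T + \<tau>"
      then show "y r \<le> B" using tM unfolding B_def by force
    next
      fix r assume r: "T + \<tau> < r" "r \<le> t"
      show "(y has_real_derivative - s * y r + cc * y (r - \<tau>) * x (r - \<tau>)) (at r)"
        using dy[of r] r T tau_nn by simp
      have xr: "x (r - \<tau>) \<le> 1 + e2" using T r by auto
      have yr: "y (r - \<tau>) \<ge> 0" using y_nn[of "r - \<tau>"] r T tau_nn by simp
      have "cc * x (r - \<tau>) \<le> q" using xr cc_pos cce2 by (metis mult_left_mono less_imp_le)
      then have "cc * x (r - \<tau>) * y (r - \<tau>) \<le> q * y (r - \<tau>)" using yr by (intro mult_right_mono)
      then show "- s * y r + cc * y (r - \<tau>) * x (r - \<tau>) \<le> - s * y r + q * y (r - \<tau>)"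
        by (simp add: algebra_simps)
    qed (use q tau_nn B t in auto)
    then show ?thesis using t unfolding m_def by auto
  qed
  have ylim: "(y \<longlongrightarrow> 0) at_top"
  proof (rule order_tendstoI)
    fix a :: real assume "a < 0"
    then show "eventually (\<lambda>t. a < y t) at_top"
      using y_nn tau_nn unfolding eventually_at_top_linorder
      by (intro exI[of _ 0]) (smt (verit))
  next
    fix a :: real assume a: "a > 0"
    define N where "N = T + \<tau> + 2 * B / (m * a)"
    have "\<forall>t\<ge>N. y t < a"
    proof (intro allI impI)
      fix t assume t: "t \<ge> N"
      have NT: "N \<ge> T + \<tau>" unfolding N_def using B m a by simp
      have "exp (m * (t - T - \<tau>)) \<ge> 1 + m * (t - T - \<tau>)" by (rule exp_ge_add_one_self)
      moreover have "m * (t - T - \<tau>) \<ge> 2 * B / a"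
      proof -
        have "t - T - \<tau> \<ge> 2 * B / (m * a)" using t unfolding N_def by simp
        then have "m * (t - T - \<tau>) \<ge> m * (2 * B / (m * a))" using m by (intro mult_left_mono) auto
        then show ?thesis using m by simp
      qed
      ultimately have "exp (m * (t - T - \<tau>)) > 2 * B / a" by linarith
      then have "2 * B < a * exp (m * (t - T - \<tau>))" using a by (simp add: field_simps)
      moreover have "2 * B * exp (- m * (t - T - \<tau>)) = 2 * B / exp (m * (t - T - \<tau>))"
        by (simp add: exp_minus divide_inverse)
      ultimately have "2 * B * exp (- m * (t - T - \<tau>)) < a"
        by (simp add: divide_less_eq)
      moreover have "t \<ge> T" using NT t tau_nn by simp
      ultimately show "y t < a" using ybound[of t] by simp
    qed
    then show "eventually (\<lambda>t. y t < a) at_top" unfolding eventually_at_top_linorder by blast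
  qed
  have xlim: "(x \<longlongrightarrow> 1) at_top"
  proof (rule order_tendstoI)
    fix a :: real assume a: "a > 1"
    obtain T' where T': "\<forall>t\<ge>T'. x t \<le> 1 + (a - 1) / 2" using x_ev_le[of "(a-1)/2"] a by auto
    have "\<forall>t\<ge>T'. x t < a"
    proof (intro allI impI)
      fix t assume "t \<ge> T'"
      then have "x t \<le> 1 + (a - 1) / 2" using T' by blast
      then show "x t < a" using a by argo
    qed
    then show "eventually (\<lambda>t. x t < a) at_top" unfolding eventually_at_top_linorder by blast
  next
    fix a :: real assume a: "a < 1"
    define \<eta> where "\<eta> = min (1/2) ((1 - a) / 4)"
    have e4: "\<eta> \<le> (1 - a) / 4" unfolding \<eta>_def by (rule min.cobounded2)
    have eta1: "\<eta> > 0" "\<eta> \<le> 1/2" using a unfolding \<eta>_def by auto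
    have eta3: "3 * \<eta> < 1 - a" using e4 a by argo
    note eta = eta1 eta3
    obtain t1 where t1: "\<forall>t\<ge>t1. y t < \<eta>"
      using order_tendstoD(2)[OF ylim eta(1)] unfolding eventually_at_top_linorder by auto
    define t2 where "t2 = max t1 0"
    have t2: "t2 \<ge> 0" "t2 \<ge> t1" unfolding t2_def by auto
    define u0 where "u0 = 1 / x t2"
    have u0: "u0 > 0" unfolding u0_def using x_pos t2 by simp
    define N where "N = t2 + u0 / (\<eta> * (1 - \<eta>))"
    have "\<forall>t\<ge>N. a < x t"
    proof (intro allI impI)
      fix t assume t: "t \<ge> N"
      have "u0 / (\<eta> * (1 - \<eta>)) > 0" using u0 eta by simp
      then have tt2: "t \<ge> t2" using t unfolding N_def by argo
      have ub: "1 / x t \<le> 1 / (1 - \<eta>) + exp (- (1 - \<eta>) * (t - t2)) * u0"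
        unfolding u0_def using t2 tt2 t1 eta
        by (intro x_lower_from_y) (auto simp: less_imp_le)
      have "exp ((1 - \<eta>) * (t - t2)) \<ge> 1 + (1 - \<eta>) * (t - t2)" by (rule exp_ge_add_one_self)
      moreover have "(1 - \<eta>) * (t - t2) \<ge> u0 / \<eta>"
      proof -
        have "t - t2 \<ge> u0 / (\<eta> * (1 - \<eta>))" using t unfolding N_def by simp
        then have "(1 - \<eta>) * (t - t2) \<ge> (1 - \<eta>) * (u0 / (\<eta> * (1 - \<eta>)))" using eta
          by (intro mult_left_mono) auto
        then show ?thesis using eta by simp
      qed
      ultimately have "exp ((1 - \<eta>) * (t - t2)) \<ge> u0 / \<eta>" by linarith
      then have "u0 \<le> \<eta> * exp ((1 - \<eta>) * (t - t2))" using eta by (simp add: field_simps)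
      moreover have "exp (- (1 - \<eta>) * (t - t2)) * u0 = u0 / exp ((1 - \<eta>) * (t - t2))"
        by (rule exp_neg_div)
      ultimately have "exp (- (1 - \<eta>) * (t - t2)) * u0 \<le> \<eta>"
        by (simp add: divide_le_eq)
      moreover have "1 / (1 - \<eta>) \<le> 1 + 2 * \<eta>"
      proof -
        have h1: "\<eta> * (1 - 2 * \<eta>) \<ge> 0" using eta by simp
        have h2: "(1 + 2 * \<eta>) * (1 - \<eta>) = 1 + \<eta> * (1 - 2 * \<eta>)" by (simp add: algebra_simps)
        have "1 \<le> (1 + 2 * \<eta>) * (1 - \<eta>)" unfolding h2 using h1 by simp
        then show ?thesis using eta by (simp add: field_simps)
      qed
      ultimately have "1 / x t \<le> 1 + 3 * \<eta>" using ub by linarith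
      moreover have "x t > 0" using x_pos t2 tt2 by simp
      ultimately have "x t \<ge> 1 / (1 + 3 * \<eta>)" using eta by (simp add: field_simps)
      moreover have "1 / (1 + 3 * \<eta>) \<ge> 1 - 3 * \<eta>"
      proof -
        have "(1 - 3 * \<eta>) * (1 + 3 * \<eta>) \<le> 1" by (simp add: algebra_simps)
        then show ?thesis using eta by (simp add: field_simps)
      qed
      ultimately show "a < x t" using eta by linarith
    qed
    then show "eventually (\<lambda>t. a < x t) at_top" unfolding eventually_at_top_linorder by blast
  qed
  show ?thesis using xlim ylim by simp
qed

end

definition "Bcg s Y \<tau> = Y * exp (- s * \<tau>) * (1 + s) ^ 2 / (4 * s) + 1"
definition "delg s Y \<tau> = s / (Y * exp (- s * \<tau>)) / 2"
definition "Lg s Y \<tau> = ln (8 * Bcg s Y \<tau>) / mu s (s/2) \<tau>"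
definition "eps0 s Y \<tau> = delg s Y \<tau> * exp (- (1 + Bcg s Y \<tau>) * (\<tau> + Lg s Y \<tau>))"

definition "x1g s Y \<tau> = (1 + s / (Y * exp (- s * \<tau>))) / 2"
definition "wg s Y \<tau> = (1 / x1g s Y \<tau> - 1) / 2"
definition "eta1 s Y \<tau> = min (1/2) (wg s Y \<tau> / (1 + wg s Y \<tau>))"
definition "L2g s Y \<tau> = 2 * max 0 (ln (1 / (eps0 s Y \<tau> * wg s Y \<tau>)))"
definition "eta0 s Y \<tau> = eta1 s Y \<tau> * exp (- s * (L2g s Y \<tau> + \<tau>)) / 2"

context sol
begin

lemma Bc_eq: "Bc = Bcg s Y \<tau>" unfolding Bc_def Bcg_def cc_def by simp

lemma x_persist:
  assumes cs: "s < cc"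
  shows "\<exists>T. \<forall>t\<ge>T. x t \<ge> eps0 s Y \<tau>"
proof -
  define \<delta> where "\<delta> = delg s Y \<tau>"
  have dcc: "cc * \<delta> = s / 2" unfolding \<delta>_def delg_def cc_def[symmetric] using cc_pos by simp
  have d0: "\<delta> > 0" unfolding \<delta>_def delg_def cc_def[symmetric] using cc_pos s_pos by simp
  have d1: "\<delta> < 1/2" unfolding \<delta>_def delg_def cc_def[symmetric] using cc_pos cs by simp
  define m where "m = mu s (s/2) \<tau>"
  have m: "m > 0" unfolding m_def using mu_props[of "s/2" s \<tau>] s_pos tau_nn by auto
  define L where "L = Lg s Y \<tau>"
  have Bc1: "Bc \<ge> 1" by (rule Bc_ge)
  have L0: "L \<ge> 0" unfolding L_def Lg_def Bc_eq[symmetric] m_def[symmetric] using m Bc1 by simp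
  have eL: "exp (- m * L) = 1 / (8 * Bc)"
  proof -
    have "- m * L = - ln (8 * Bc)" unfolding L_def Lg_def Bc_eq[symmetric] m_def[symmetric] using m by simp
    moreover have "exp (- ln (8 * Bc)) = inverse (exp (ln (8 * Bc)))" by (rule exp_minus)
    moreover have "exp (ln (8 * Bc)) = 8 * Bc" using Bc1 by simp
    ultimately show ?thesis by (simp add: inverse_eq_divide)
  qed
  define K where "K = 1 + Bc"
  have K: "K > 0" unfolding K_def using Bc1 by simp
  have eps: "eps0 s Y \<tau> = \<delta> * exp (- K * (\<tau> + L))"
    unfolding eps0_def \<delta>_def K_def L_def Bc_eq by simp
  obtain Ty where Ty: "\<forall>t\<ge>Ty. y t \<le> Bc" using y_ev_bound by auto
  obtain Tx where Tx: "Tx \<ge> 1" "\<forall>t\<ge>Tx. x t \<le> 1 + 1" using x_ev_le[of 1] by auto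
  define T1 where "T1 = max Ty Tx"
  have T1: "T1 \<ge> 1" "\<And>t. t \<ge> T1 \<Longrightarrow> y t \<le> Bc" "\<And>t. t \<ge> T1 \<Longrightarrow> x t \<le> 2"
    unfolding T1_def using Tx Ty by auto
  have claimB: "x t \<ge> exp (- K * (t - a)) * x a" if a: "T1 \<le> a" "a \<le> t" for a t
  proof (rule exp_lower[where f' = "\<lambda>r. x r * (1 - x r) - y r * x r"])
    show "continuous_on {a..t} x" using a T1 tau_nn by (intro contx') auto
    fix r assume r: "a < r" "r < t"
    show "(x has_real_derivative x r * (1 - x r) - y r * x r) (at r)" using dx[of r] r a T1 by simp
    have xr: "x r > 0" using x_pos[of r] r a T1 by simp
    have "1 - x r - y r \<ge> - K" using T1(2,3)[of r] r a unfolding K_def by simp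
    then have "x r * (- K) \<le> x r * (1 - x r - y r)" using xr by (intro mult_left_mono) auto
    then show "- K * x r \<le> x r * (1 - x r) - y r * x r" by (simp add: algebra_simps)
  qed (use a in auto)
  have claimA: "x t \<ge> exp (- (- 1/4) * (t - (a + \<tau> + L))) * x (a + \<tau> + L)"
    if a: "T1 \<le> a" "a + \<tau> + L \<le> t" "\<forall>r\<in>{a..t}. x r \<le> \<delta>" for a t
  proof -
    have dec: "\<forall>r\<in>{a..t}. y r < 2 * Bc * exp (- mu s (s/2) \<tau> * (r - a - \<tau>))"
    proof (rule decay[where y' = "\<lambda>r. - s * y r + cc * y (r - \<tau>) * x (r - \<tau>)"])
      show "continuous_on {a..t} y" using a T1 tau_nn by (intro conty') auto
      show "a \<le> t" using a tau_nn L0 by simp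
      fix r assume r: "a \<le> r" "r \<le> a + \<tau>"
      then show "y r \<le> Bc" using T1(2)[of r] a by simp
    next
      fix r assume r: "a + \<tau> < r" "r \<le> t"
      show "(y has_real_derivative - s * y r + cc * y (r - \<tau>) * x (r - \<tau>)) (at r)"
        using dy[of r] r a T1 tau_nn by simp
      have xr: "x (r - \<tau>) \<le> \<delta>" using a(3) r tau_nn by auto
      have yr: "y (r - \<tau>) \<ge> 0" using y_nn[of "r - \<tau>"] r a T1 tau_nn by simp
      have "cc * x (r - \<tau>) \<le> cc * \<delta>" using xr cc_pos by (intro mult_left_mono) auto
      then have "cc * x (r - \<tau>) * y (r - \<tau>) \<le> (s/2) * y (r - \<tau>)" using yr dcc by (intro mult_right_mono) auto
      then show "- s * y r + cc * y (r - \<tau>) * x (r - \<tau>) \<le> - s * y r + s / 2 * y (r - \<tau>)"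
        by (simp add: algebra_simps)
    qed (use s_pos tau_nn Bc1 in auto)
    show ?thesis
    proof (rule exp_lower[where f' = "\<lambda>r. x r * (1 - x r) - y r * x r"])
      show "continuous_on {a + \<tau> + L..t} x" using a T1 tau_nn L0 by (intro contx') auto
      fix r assume r: "a + \<tau> + L < r" "r < t"
      have r0: "r > 0" using r a T1 tau_nn L0 by simp
      show "(x has_real_derivative x r * (1 - x r) - y r * x r) (at r)" using dx[of r] r0 by simp
      have xr: "x r > 0" using x_pos[of r] r0 by simp
      have "y r < 2 * Bc * exp (- m * (r - a - \<tau>))" using dec r a tau_nn L0 unfolding m_def by auto
      also have "\<dots> \<le> 2 * Bc * exp (- m * L)"
      proof -
        have "- m * (r - a - \<tau>) \<le> - m * L" using m r by (intro mult_left_mono_neg) auto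
        then show ?thesis using Bc1 by simp
      qed
      also have "\<dots> = 1/4" using eL Bc1 by simp
      finally have yr: "y r < 1/4" .
      have xd: "x r \<le> \<delta>" using a(3) r a tau_nn L0 by auto
      have "1 - x r - y r \<ge> 1/4" using yr xd d1 by argo
      then have "x r * (1/4) \<le> x r * (1 - x r - y r)" using xr by (intro mult_left_mono) auto
      then show "- (- 1 / 4) * x r \<le> x r * (1 - x r) - y r * x r" by (simp add: algebra_simps)
    qed (use a in auto)
  qed
  obtain t' where t': "t' \<ge> T1" "x t' \<ge> \<delta>"
  proof (rule ccontr)
    assume "\<not> thesis"
    then have low: "\<forall>t\<ge>T1. x t < \<delta>" using that by force
    define a0 where "a0 = T1 + \<tau> + L"
    have a0: "a0 \<ge> T1" unfolding a0_def using tau_nn L0 by simp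
    have xa0: "x a0 > 0" using x_pos[of a0] a0 T1 by simp
    define t where "t = a0 + 4 * \<delta> / x a0"
    have ta0: "t \<ge> a0" unfolding t_def using xa0 d0 by simp
    have "x t \<ge> exp (- (- 1/4) * (t - a0)) * x a0"
      unfolding a0_def
      by (rule claimA) (use low ta0 a0 less_imp_le in \<open>auto simp: a0_def\<close>)
    moreover have "exp (- (- 1/4) * (t - a0)) \<ge> 1 + \<delta> / x a0"
    proof -
      have "- (- 1/4) * (t - a0) = \<delta> / x a0" unfolding t_def by simp
      then show ?thesis using exp_ge_add_one_self[of "\<delta> / x a0"] by simp
    qed
    moreover have "exp (- (- 1/4) * (t - a0)) * x a0 \<ge> (1 + \<delta> / x a0) * x a0"
      by (rule mult_right_mono) (use xa0 calculation in auto)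
    ultimately have "x t \<ge> (1 + \<delta> / x a0) * x a0" by linarith
    also have "(1 + \<delta> / x a0) * x a0 = x a0 + \<delta>" using xa0 by (simp add: field_simps)
    finally have "x t > \<delta>" using xa0 by simp
    moreover have "x t < \<delta>" using low ta0 a0 by simp
    ultimately show False by simp
  qed
  have eps_le: "eps0 s Y \<tau> \<le> \<delta>"
  proof -
    have "exp (- K * (\<tau> + L)) \<le> 1" using K tau_nn L0 by (simp add: mult_nonneg_nonneg)
    then show ?thesis unfolding eps using d0 by (simp add: mult_left_le)
  qed
  have "\<forall>t\<ge>t'. x t \<ge> eps0 s Y \<tau>"
  proof (intro allI impI)
    fix t assume t: "t \<ge> t'"
    show "x t \<ge> eps0 s Y \<tau>"
    proof (cases "x t \<ge> \<delta>")
      case True then show ?thesis using eps_le by simp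
    next
      case False
      have ct: "continuous_on {t'..t} x" using t' T1 tau_nn by (intro contx') auto
      obtain a where a: "a \<in> {t'..<t}" "x a = \<delta>" "\<forall>r\<in>{a<..t}. x r < \<delta>"
        using last_time[of t' t x \<delta>, OF _ ct] t t' False by auto
      have aT: "a \<ge> T1" using a t' by auto
      have below: "\<forall>r\<in>{a..t}. x r \<le> \<delta>"
      proof
        fix r assume r: "r \<in> {a..t}"
        show "x r \<le> \<delta>"
        proof (cases "r = a")
          case True then show ?thesis using a(2) by simp
        next
          case False then have "r \<in> {a<..t}" using r by auto
          then have "x r < \<delta>" using a(3) by blast
          then show ?thesis by simp
        qed
      qed
      have B1: "x (a + \<tau> + L) \<ge> eps0 s Y \<tau>" if "a + \<tau> + L \<le> t"
      proof -
        have "x (a + \<tau> + L) \<ge> exp (- K * ((a + \<tau> + L) - a)) * x a"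
          using claimB[of a "a + \<tau> + L"] aT tau_nn L0 by simp
        then show ?thesis unfolding eps using a(2) by (simp add: mult.commute)
      qed
      show ?thesis
      proof (cases "t \<le> a + \<tau> + L")
        case True
        have "x t \<ge> exp (- K * (t - a)) * x a" using claimB[of a t] aT a by simp
        moreover have "exp (- K * (t - a)) \<ge> exp (- K * (\<tau> + L))"
          using True K by (simp add: mult_left_mono)
        moreover have "exp (- K * (t - a)) * \<delta> \<ge> exp (- K * (\<tau> + L)) * \<delta>"
          by (rule mult_right_mono) (use calculation d0 in auto)
        ultimately show ?thesis unfolding eps using a(2) by (simp add: mult.commute)
      next
        case False
        have f1: "x t \<ge> exp (- (- 1/4) * (t - (a + \<tau> + L))) * x (a + \<tau> + L)"
          using claimA[of a t] aT below False by simp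
        have f2: "exp (- (- 1/4) * (t - (a + \<tau> + L))) \<ge> 1" using False by simp
        have f3: "x (a + \<tau> + L) > 0" using x_pos aT T1 tau_nn L0 by simp
        have "exp (- (- 1/4) * (t - (a + \<tau> + L))) * x (a + \<tau> + L) \<ge> 1 * x (a + \<tau> + L)"
          using f2 f3 by (intro mult_right_mono) auto
        then have "x t \<ge> x (a + \<tau> + L)" using f1 by linarith
        then show ?thesis using B1 False by simp
      qed
    qed
  qed
  then show ?thesis by blast
qed


lemma eps0_pos: "eps0 s Y \<tau> > 0"
  unfolding eps0_def delg_def using s_pos Y_pos by simp

lemma y_persist:
  assumes cs: "s < cc" and yp: "\<exists>t0\<ge>0. \<forall>t\<ge>t0. y t > 0"
  shows "\<exists>T. \<forall>t\<ge>T. y t \<ge> eta0 s Y \<tau>"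
proof -
  define xs where "xs = s / cc"
  have xs: "0 < xs" "xs < 1" unfolding xs_def using cs cc_pos s_pos by auto
  define x1 where "x1 = x1g s Y \<tau>"
  have x1: "x1 = (1 + xs) / 2" unfolding x1_def x1g_def xs_def cc_def by simp
  have x1b: "xs < x1" "x1 < 1" "x1 > 0" using xs unfolding x1 by auto
  define w where "w = wg s Y \<tau>"
  have w: "w = (1 / x1 - 1) / 2" unfolding w_def wg_def x1_def by simp
  have w0: "w > 0" unfolding w using x1b by (simp add: field_simps)
  have x1w: "1 / x1 = 1 + 2 * w" unfolding w by argo
  define \<eta> where "\<eta> = eta1 s Y \<tau>"
  have eta: "\<eta> = min (1/2) (w / (1 + w))" unfolding \<eta>_def eta1_def w_def by simp
  have eta0a: "0 < \<eta>" using w0 unfolding eta by simp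
  have eta0b: "\<eta> \<le> 1/2" unfolding eta by (rule min.cobounded1)
  note eta0 = eta0a eta0b
  have eta1: "1 / (1 - \<eta>) \<le> 1 + w"
  proof -
    have "\<eta> \<le> w / (1 + w)" unfolding eta by (rule min.cobounded2)
    then have "1 - \<eta> \<ge> 1 / (1 + w)" using w0 by (simp add: field_simps)
    moreover have "1 / (1 + w) > 0" using w0 by simp
    moreover have "1 - \<eta> > 0" using eta0 by simp
    ultimately have "1 / (1 - \<eta>) \<le> 1 / (1 / (1 + w))"
      by (intro divide_left_mono) (auto intro!: mult_pos_pos)
    then show ?thesis by simp
  qed
  define \<epsilon> where "\<epsilon> = eps0 s Y \<tau>"
  have e0: "\<epsilon> > 0" unfolding \<epsilon>_def by (rule eps0_pos)
  define L2 where "L2 = L2g s Y \<tau>"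
  have L2: "L2 = 2 * max 0 (ln (1 / (\<epsilon> * w)))" unfolding L2_def L2g_def \<epsilon>_def w_def by simp
  have L20: "L2 \<ge> 0" unfolding L2 by simp
  have eL2: "exp (- L2 / 2) \<le> \<epsilon> * w"
  proof -
    have "- L2 / 2 \<le> - ln (1 / (\<epsilon> * w))" unfolding L2 by simp
    also have "\<dots> = ln (\<epsilon> * w)" using e0 w0 by (simp add: ln_div)
    finally have "exp (- L2 / 2) \<le> exp (ln (\<epsilon> * w))" by simp
    then show ?thesis using e0 w0 by simp
  qed
  define q where "q = cc * x1 / s"
  have q1: "q > 1" unfolding q_def using x1b xs cc_pos s_pos unfolding xs_def by (simp add: field_simps)
  have sq: "s * q = cc * x1" unfolding q_def using s_pos by simp
  define n where "n = nu s q \<tau>"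
  have n: "n > 0" unfolding n_def using nu_props[OF s_pos q1 tau_nn] by simp
  define m where "m = eta0 s Y \<tau>"
  have m: "m = \<eta> * exp (- s * (L2 + \<tau>)) / 2" unfolding m_def eta0_def \<eta>_def L2_def by simp
  have m0: "m > 0" unfolding m using eta0 by simp
  have mle: "m \<le> \<eta>"
  proof -
    have "exp (- s * (L2 + \<tau>)) \<le> 1" using s_pos L20 tau_nn by (simp add: mult_nonneg_nonneg)
    then have "\<eta> * exp (- s * (L2 + \<tau>)) \<le> \<eta>" using eta0 by (simp add: mult_left_le)
    then show ?thesis unfolding m using eta0 by argo
  qed
  obtain T2 where T2: "\<forall>t\<ge>T2. x t \<ge> \<epsilon>" using x_persist[OF cs] unfolding \<epsilon>_def by auto
  obtain t0 where t0: "t0 \<ge> 0" "\<forall>t\<ge>t0. y t > 0" using yp by auto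
  define T3 where "T3 = max (max T2 t0) 0"
  have T3: "T3 \<ge> 0" "\<And>t. t \<ge> T3 \<Longrightarrow> x t \<ge> \<epsilon>" "\<And>t. t \<ge> T3 \<Longrightarrow> y t > 0"
    unfolding T3_def using T2 t0 by auto
  have claimC: "x r \<ge> x1"
    if a: "T3 \<le> a" "a + L2 \<le> r" "\<forall>r\<in>{a..r}. y r \<le> \<eta>" for a r
  proof -
    have ub: "1 / x r \<le> 1 / (1 - \<eta>) + exp (- (1 - \<eta>) * (r - a)) * (1 / x a)"
      using a T3 eta0 L20 by (intro x_lower_from_y) auto
    have "- (1 - \<eta>) * (r - a) \<le> - L2 / 2"
    proof -
      have "(1 - \<eta>) * (r - a) \<ge> (1/2) * (r - a)" using eta0 a L20 by (intro mult_right_mono) auto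
      moreover have "(1/2) * (r - a) \<ge> L2 / 2" using a by simp
      ultimately show ?thesis by argo
    qed
    then have "exp (- (1 - \<eta>) * (r - a)) \<le> exp (- L2 / 2)" by simp
    also have "\<dots> \<le> \<epsilon> * w" by (rule eL2)
    finally have ex: "exp (- (1 - \<eta>) * (r - a)) \<le> \<epsilon> * w" .
    have xa: "x a \<ge> \<epsilon>" using T3 a by simp
    then have ia: "1 / x a \<le> 1 / \<epsilon>" using e0 by (intro divide_left_mono) auto
    have "exp (- (1 - \<eta>) * (r - a)) * (1 / x a) \<le> (\<epsilon> * w) * (1 / \<epsilon>)"
      using ex ia e0 xa w0 by (intro mult_mono) auto
    also have "\<dots> = w" using e0 by simp
    finally have "1 / x r \<le> 1 + w + w" using ub eta1 by linarith
    then have "1 / x r \<le> 1 / x1" unfolding x1w by simp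
    moreover have "x r > 0" using x_pos[of r] a T3 L20 by simp
    ultimately show ?thesis using x1b by (simp add: field_simps)
  qed
  have claimE: "y t > mm * exp (n * (t - (a + L2 + \<tau>)))"
    if a: "T3 \<le> a" "a + L2 + \<tau> \<le> t" "\<forall>r\<in>{a..t}. y r \<le> \<eta>" "mm > 0"
      "\<forall>r\<in>{a+L2..a+L2+\<tau>}. y r > mm" for a t mm
  proof -
    have "\<forall>r\<in>{a + L2 + \<tau>..t}. y r > mm * exp (nu s q \<tau> * (r - (a + L2 + \<tau>)))"
    proof (rule growth[where y' = "\<lambda>r. - s * y r + cc * y (r - \<tau>) * x (r - \<tau>)"])
      show "continuous_on {a + L2 + \<tau>..t} y" using a T3 tau_nn L20 by (intro conty') auto
      fix r assume r: "a + L2 + \<tau> - \<tau> \<le> r" "r \<le> a + L2 + \<tau>"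
      then show "mm < y r" using a(5) by auto
    next
      fix r assume r: "a + L2 + \<tau> < r" "r \<le> t"
      have r0: "r > 0" using r a T3 L20 tau_nn by simp
      show "(y has_real_derivative - s * y r + cc * y (r - \<tau>) * x (r - \<tau>)) (at r)"
        using dy[of r] r0 by simp
      have xr: "x (r - \<tau>) \<ge> x1"
        by (rule claimC[of a]) (use a r tau_nn in auto)
      have yr: "y (r - \<tau>) \<ge> 0" using y_nn[of "r - \<tau>"] r a T3 L20 tau_nn by simp
      have "cc * x1 \<le> cc * x (r - \<tau>)" using xr cc_pos by (intro mult_left_mono) auto
      then have "cc * x1 * y (r - \<tau>) \<le> cc * x (r - \<tau>) * y (r - \<tau>)" using yr by (intro mult_right_mono)
      then show "- s * y r + s * q * y (r - \<tau>) \<le> - s * y r + cc * y (r - \<tau>) * x (r - \<tau>)"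
        unfolding sq by (simp add: algebra_simps)
    qed (use s_pos q1 tau_nn a in auto)
    then show ?thesis using a unfolding n_def by auto
  qed
  obtain t' where t': "t' \<ge> T3" "y t' \<ge> \<eta>"
  proof (rule ccontr)
    assume "\<not> thesis"
    then have low: "\<forall>t\<ge>T3. y t < \<eta>" using that by force
    define a' where "a' = T3 + L2 + \<tau>"
    define m' where "m' = exp (- s * (L2 + \<tau>)) * y T3 / 2"
    have yT3: "y T3 > 0" using T3 by simp
    have m': "m' > 0" unfolding m'_def using yT3 by simp
    have win: "\<forall>r\<in>{T3+L2..T3+L2+\<tau>}. y r > m'"
    proof
      fix r assume r: "r \<in> {T3+L2..T3+L2+\<tau>}"
      have "y r \<ge> exp (- s * (r - T3)) * y T3" using y_lower[of T3 r] T3 r L20 by simp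
      moreover have "exp (- s * (r - T3)) \<ge> exp (- s * (L2 + \<tau>))" using r s_pos by simp
      moreover have "exp (- s * (r - T3)) * y T3 \<ge> exp (- s * (L2 + \<tau>)) * y T3"
        using calculation(2) yT3 by (intro mult_right_mono) auto
      ultimately have "y r \<ge> exp (- s * (L2 + \<tau>)) * y T3" by linarith
      moreover have "exp (- s * (L2 + \<tau>)) * y T3 > 0" using yT3 by simp
      ultimately show "y r > m'" unfolding m'_def by argo
    qed
    define t where "t = a' + \<eta> / (m' * n)"
    have ta: "t \<ge> a'" unfolding t_def using m' n eta0 by simp
    have "y t > m' * exp (n * (t - (T3 + L2 + \<tau>)))"
      by (rule claimE) (use T3 ta low m' win in \<open>auto simp: a'_def less_imp_le\<close>)
    moreover have "exp (n * (t - (T3 + L2 + \<tau>))) \<ge> \<eta> / m'"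
    proof -
      have "n * (t - (T3 + L2 + \<tau>)) = \<eta> / m'" unfolding t_def a'_def using n m' by simp
      then have "exp (n * (t - (T3 + L2 + \<tau>))) = exp (\<eta> / m')" by simp
      moreover have "1 + \<eta> / m' \<le> exp (\<eta> / m')" by (rule exp_ge_add_one_self)
      ultimately show ?thesis by argo
    qed
    then have "m' * exp (n * (t - (T3 + L2 + \<tau>))) \<ge> m' * (\<eta> / m')" using m' by (intro mult_left_mono) auto
    ultimately have "y t > \<eta>" using m' by simp
    moreover have "y t < \<eta>" using low ta T3 L20 tau_nn unfolding a'_def by simp
    ultimately show False by simp
  qed
  have "\<forall>t\<ge>t'. y t \<ge> m"
  proof (intro allI impI)
    fix t assume t: "t \<ge> t'"
    show "y t \<ge> m"
    proof (cases "y t \<ge> \<eta>")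
      case True then show ?thesis using mle by simp
    next
      case False
      have ct: "continuous_on {t'..t} y" using t' T3 tau_nn by (intro conty') auto
      obtain a where a: "a \<in> {t'..<t}" "y a = \<eta>" "\<forall>r\<in>{a<..t}. y r < \<eta>"
        using last_time[of t' t y \<eta>, OF _ ct] t t' False by auto
      have aT: "a \<ge> T3" using a t' by auto
      have below: "\<forall>r\<in>{a..t}. y r \<le> \<eta>"
      proof
        fix r assume r: "r \<in> {a..t}"
        show "y r \<le> \<eta>"
        proof (cases "r = a")
          case True then show ?thesis using a(2) by simp
        next
          case False then have "r \<in> {a<..t}" using r by auto
          then have "y r < \<eta>" using a(3) by blast
          then show ?thesis by simp
        qed
      qed
      have lowb: "y r \<ge> 2 * m" if r: "a \<le> r" "r \<le> a + L2 + \<tau>" for r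
      proof -
        have "y r \<ge> exp (- s * (r - a)) * y a" using y_lower[of a r] aT T3 r by simp
        moreover have "exp (- s * (r - a)) \<ge> exp (- s * (L2 + \<tau>))" using r s_pos by simp
        moreover have "exp (- s * (r - a)) * \<eta> \<ge> exp (- s * (L2 + \<tau>)) * \<eta>"
          using calculation(2) eta0 by (intro mult_right_mono) auto
        ultimately have "y r \<ge> exp (- s * (L2 + \<tau>)) * \<eta>" using a(2) by simp
        then show ?thesis unfolding m by (simp add: mult.commute)
      qed
      show ?thesis
      proof (cases "t \<le> a + L2 + \<tau>")
        case True
        then show ?thesis using lowb[of t] a m0 by simp
      next
        case False
        have win: "\<forall>r\<in>{a+L2..a+L2+\<tau>}. y r > m"
        proof
          fix r assume r: "r \<in> {a+L2..a+L2+\<tau>}"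
          then have "y r \<ge> 2 * m" using lowb[of r] L20 by simp
          then show "y r > m" using m0 by simp
        qed
        have "y t > m * exp (n * (t - (a + L2 + \<tau>)))"
          by (rule claimE) (use aT False below m0 win in auto)
        moreover have "exp (n * (t - (a + L2 + \<tau>))) \<ge> 1" using False n by simp
        moreover have "m * 1 \<le> m * exp (n * (t - (a + L2 + \<tau>)))"
          using calculation(2) m0 by (intro mult_left_mono) auto
        ultimately show ?thesis by simp
      qed
    qed
  qed
  then show ?thesis unfolding m_def by blast
qed

end

lemma tendsto_at_topI_eps:
  fixes f :: "real \<Rightarrow> real"
  assumes "\<And>e. e > 0 \<Longrightarrow> \<exists>T. \<forall>t\<ge>T. \<bar>f t - l\<bar> < e"
  shows "(f \<longlongrightarrow> l) at_top"
proof (rule order_tendstoI)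
  fix a assume "a < l"
  then obtain T where "\<forall>t\<ge>T. \<bar>f t - l\<bar> < l - a" using assms[of "l - a"] by auto
  then have "\<forall>t\<ge>T. a < f t" by (auto simp: abs_less_iff)
  then show "eventually (\<lambda>t. a < f t) at_top" unfolding eventually_at_top_linorder by blast
next
  fix a assume "a > l"
  then obtain T where "\<forall>t\<ge>T. \<bar>f t - l\<bar> < a - l" using assms[of "a - l"] by auto
  then have "\<forall>t\<ge>T. f t < a" by (auto simp: abs_less_iff)
  then show "eventually (\<lambda>t. f t < a) at_top" unfolding eventually_at_top_linorder by blast
qed

lemma xlnx_ge: "z > 0 \<Longrightarrow> k > 0 \<Longrightarrow> z - k * ln z \<ge> k - k * ln (k::real)"
proof -
  assume z: "z > 0" and k: "k > 0"
  have "ln (z / k) \<le> z / k - 1" using ln_le_minus_one z k by simp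
  then have "k * ln (z / k) \<le> k * (z / k - 1)" using k by (intro mult_left_mono) auto
  then show ?thesis using z k by (simp add: ln_div algebra_simps)
qed

context sol
begin

lemma conv_Eplus0:
  assumes tau0: "\<tau> = 0" and sY: "s < Y" and y0: "\<psi> 0 > 0"
  shows "(x \<longlongrightarrow> s / Y) at_top \<and> (y \<longlongrightarrow> 1 - s / Y) at_top"
proof -
  have ccY: "cc = Y" unfolding cc_def using tau0 by simp
  define xs where "xs = s / Y"
  define ys where "ys = 1 - s / Y"
  have xs: "0 < xs" "xs < 1" unfolding xs_def using s_pos Y_pos sY by auto
  have ys: "0 < ys" "xs + ys = 1" unfolding ys_def xs_def using s_pos Y_pos sY by auto
  have ypos: "y t > 0" if "t \<ge> 0" for t
    using y_pos_after[of 0 t] that y0 init[of 0] tau_nn by simp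
  have xpos: "x t > 0" if "t \<ge> 0" for t using x_pos that by simp
  have dy0: "(y has_real_derivative (Y * y t * (x t - xs))) (at t)" if "t > 0" for t
  proof -
    have "(y has_real_derivative (- s * y t + cc * y (t - \<tau>) * x (t - \<tau>))) (at t)" using dy that by simp
    moreover have "- s * y t + cc * y (t - \<tau>) * x (t - \<tau>) = - s * y t + Y * y t * x t"
      using ccY tau0 by simp
    moreover have "- s * y t + Y * y t * x t = Y * y t * (x t - xs)"
      unfolding xs_def using Y_pos by (simp add: field_simps)
    ultimately show ?thesis by simp
  qed
  define V where "V t = x t - xs * ln (x t) + (y t - ys * ln (y t)) / Y" for t
  have cV: "continuous_on {a..b} V" if "a \<ge> 0" for a b
  proof -
    have "\<forall>r\<in>{a..b}. x r \<noteq> 0"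
    proof
      fix r assume "r \<in> {a..b}" then have "r \<ge> 0" using that by auto
      then show "x r \<noteq> 0" using xpos[of r] by simp
    qed
    moreover have "\<forall>r\<in>{a..b}. y r \<noteq> 0"
    proof
      fix r assume "r \<in> {a..b}" then have "r \<ge> 0" using that by auto
      then show "y r \<noteq> 0" using ypos[of r] by simp
    qed
    ultimately show ?thesis unfolding V_def using that tau_nn Y_pos
      by (intro continuous_intros contx' conty') auto
  qed
  have dV: "(V has_real_derivative (- ((x t - xs)^2))) (at t)" if t: "t > 0" for t
  proof -
    have xt: "x t > 0" and yt: "y t > 0" using xpos ypos t by auto
    have "(V has_real_derivative ((1 - xs / x t) * (x t * (1 - x t) - y t * x t)
        + (1 - ys / y t) * (Y * y t * (x t - xs)) / Y)) (at t)"
      unfolding V_def using dx[of t] dy0[of t] t xt yt Y_pos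
      by (auto intro!: derivative_eq_intros simp: field_simps)
    moreover have "(1 - xs / x t) * (x t * (1 - x t) - y t * x t)
        + (1 - ys / y t) * (Y * y t * (x t - xs)) / Y = - ((x t - xs)^2)"
    proof -
      have "(1 - xs / x t) * (x t * (1 - x t) - y t * x t) = (x t - xs) * (1 - x t - y t)"
        using xt by (simp add: field_simps)
      moreover have "(1 - ys / y t) * (Y * y t * (x t - xs)) / Y = (y t - ys) * (x t - xs)"
        using yt Y_pos by (simp add: field_simps)
      moreover have "(x t - xs) * (1 - x t - y t) + (y t - ys) * (x t - xs) = - ((x t - xs)^2)"
      proof -
        show ?thesis unfolding ys_def xs_def by (simp add: power2_eq_square algebra_simps)
      qed
      ultimately show ?thesis by simp
    qed
    ultimately show ?thesis by simp
  qed
  have Vmono: "V r \<le> V t" if "0 \<le> t" "t \<le> r" for t r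
  proof -
    have "(\<lambda>r. - V r) t \<le> (\<lambda>r. - V r) r"
      by (rule mono_deriv[where f = "\<lambda>r. - V r" and f' = "\<lambda>r. (x r - xs)^2"])
         (use that in \<open>auto intro!: continuous_intros cV derivative_eq_intros dV\<close>)
    then show ?thesis by simp
  qed
  define Vm where "Vm = xs - xs * ln xs + (ys - ys * ln ys) / Y"
  have Vlow: "V t \<ge> Vm" if "t \<ge> 0" for t
  proof -
    have "x t - xs * ln (x t) \<ge> xs - xs * ln xs" using xlnx_ge xpos[OF that] xs by simp
    moreover have "y t - ys * ln (y t) \<ge> ys - ys * ln ys" using xlnx_ge ypos[OF that] ys by simp
    then have "(y t - ys * ln (y t)) / Y \<ge> (ys - ys * ln ys) / Y" using Y_pos by (simp add: divide_right_mono)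
    ultimately show ?thesis unfolding V_def Vm_def by simp
  qed
  define Vinf where "Vinf = Inf (V ` {0..})"
  have bddV: "bdd_below (V ` {0..})" using Vlow by (auto intro!: bdd_belowI[of _ Vm])
  have Vinf_le: "Vinf \<le> V t" if "t \<ge> 0" for t
    unfolding Vinf_def using that bddV by (auto intro!: cInf_lower)
  have Vinf_approx: "\<exists>t0\<ge>T. V t0 < Vinf + k" if "k > 0" "T \<ge> 0" for k T
  proof -
    have "Inf (V ` {0..}) < Vinf + k" unfolding Vinf_def using that by simp
    then obtain t1 where t1: "t1 \<ge> 0" "V t1 < Vinf + k"
      using cInf_less_iff[of "V ` {0..}"] bddV by auto
    define t0 where "t0 = max t1 T"
    have "V t0 \<le> V t1" using Vmono[of t1 t0] t1 unfolding t0_def by simp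
    then show ?thesis using t1 unfolding t0_def by (intro exI[of _ "max t1 T"]) auto
  qed
  obtain Ty where Ty: "\<forall>t\<ge>Ty. y t \<le> Bc" using y_ev_bound by auto
  obtain Tx where Tx: "Tx \<ge> 1" "\<forall>t\<ge>Tx. x t \<le> 1 + 1" using x_ev_le[of 1] by auto
  define Tb where "Tb = max Tx Ty"
  have Tb: "Tb \<ge> 1" "\<And>t. t \<ge> Tb \<Longrightarrow> y t \<le> Bc" "\<And>t. t \<ge> Tb \<Longrightarrow> x t \<le> 2"
    unfolding Tb_def using Tx Ty by auto
  define Lx where "Lx = 2 * (3 + Bc)"
  have Lx: "Lx > 0" unfolding Lx_def using Bc_ge by simp
  have xder_bd: "\<bar>x r * (1 - x r) - y r * x r\<bar> \<le> Lx" if "r \<ge> Tb" for r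
  proof -
    have r0: "r \<ge> 0" using Tb that by simp
    have "0 < x r" "x r \<le> 2" "0 \<le> y r" "y r \<le> Bc"
      using Tb(2,3)[OF that] xpos[OF r0] ypos[OF r0] by auto
    then have "\<bar>1 - x r - y r\<bar> \<le> 3 + Bc" by (simp add: abs_le_iff)
    moreover have "\<bar>x r * (1 - x r) - y r * x r\<bar> = x r * \<bar>1 - x r - y r\<bar>"
    proof -
      have "x r * (1 - x r) - y r * x r = x r * (1 - x r - y r)" by (simp add: algebra_simps)
      then show ?thesis using \<open>0 < x r\<close> by (simp add: abs_mult)
    qed
    moreover have "x r * \<bar>1 - x r - y r\<bar> \<le> 2 * (3 + Bc)"
      using \<open>0 < x r\<close> \<open>x r \<le> 2\<close> calculation(1) by (intro mult_mono) auto
    ultimately show ?thesis unfolding Lx_def by simp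
  qed
  have xlip: "\<bar>x r - x t\<bar> \<le> Lx * (r - t)" if "Tb \<le> t" "t \<le> r" for t r
  proof -
    have c: "continuous_on {t..r} x" using that Tb tau_nn by (intro contx') auto
    have "(\<lambda>z. Lx * z - x z) t \<le> (\<lambda>z. Lx * z - x z) r"
    proof (rule mono_deriv[where f = "\<lambda>z. Lx * z - x z" and f' = "\<lambda>z. Lx - (x z * (1 - x z) - y z * x z)"])
      fix z assume z: "t < z" "z < r"
      show "((\<lambda>z. Lx * z - x z) has_real_derivative Lx - (x z * (1 - x z) - y z * x z)) (at z)"
        using dx[of z] z that Tb by (auto intro!: derivative_eq_intros)
      show "0 \<le> Lx - (x z * (1 - x z) - y z * x z)" using xder_bd[of z] z that by (simp add: abs_le_iff)
    qed (use that c in \<open>auto intro!: continuous_intros\<close>)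
    moreover have "(\<lambda>z. Lx * z + x z) t \<le> (\<lambda>z. Lx * z + x z) r"
    proof (rule mono_deriv[where f = "\<lambda>z. Lx * z + x z" and f' = "\<lambda>z. Lx + (x z * (1 - x z) - y z * x z)"])
      fix z assume z: "t < z" "z < r"
      show "((\<lambda>z. Lx * z + x z) has_real_derivative Lx + (x z * (1 - x z) - y z * x z)) (at z)"
        using dx[of z] z that Tb by (auto intro!: derivative_eq_intros)
      show "0 \<le> Lx + (x z * (1 - x z) - y z * x z)" using xder_bd[of z] z that by (simp add: abs_le_iff)
    qed (use that c in \<open>auto intro!: continuous_intros\<close>)
    ultimately show ?thesis by (simp add: algebra_simps abs_le_iff)
  qed
  have xconv: "\<exists>T. \<forall>t\<ge>T. \<bar>x t - xs\<bar> < e" if e: "e > 0" for e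
  proof -
    define d where "d = e / (2 * Lx)"
    have d: "d > 0" unfolding d_def using e Lx by simp
    define k where "k = d * e^2 / 4"
    have k: "k > 0" unfolding k_def using d e by simp
    obtain t0 where t0: "t0 \<ge> Tb" "V t0 < Vinf + k" using Vinf_approx[OF k, of Tb] Tb by auto
    have "\<forall>t\<ge>t0. \<bar>x t - xs\<bar> < e"
    proof (intro allI impI)
      fix t assume t: "t \<ge> t0"
      show "\<bar>x t - xs\<bar> < e"
      proof (rule ccontr)
        assume "\<not> \<bar>x t - xs\<bar> < e"
        then have far: "\<bar>x t - xs\<bar> \<ge> e" by simp
        have near: "(x r - xs)^2 \<ge> e^2 / 4" if r: "t \<le> r" "r \<le> t + d" for r
        proof -
          have "\<bar>x r - x t\<bar> \<le> Lx * (r - t)" using xlip[of t r] r t t0 by simp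
          also have "\<dots> \<le> Lx * d" using r Lx by (intro mult_left_mono) auto
          also have "Lx * d = e / 2" unfolding d_def using Lx by simp
          finally have "\<bar>x r - xs\<bar> \<ge> e / 2" using far by arith
          then have "(e/2)^2 \<le> \<bar>x r - xs\<bar>^2" using e by (intro power_mono) auto
          then show ?thesis by (simp add: power2_eq_square)
        qed
        have "(\<lambda>r. V r + e^2/4 * r) (t + d) \<le> (\<lambda>r. V r + e^2/4 * r) t"
        proof -
          have "(\<lambda>r. - (V r + e^2/4 * r)) t \<le> (\<lambda>r. - (V r + e^2/4 * r)) (t + d)"
          proof (rule mono_deriv[where f = "\<lambda>r. - (V r + e^2/4 * r)" and f' = "\<lambda>r. (x r - xs)^2 - e^2/4"])
            fix r assume r: "t < r" "r < t + d"
            show "((\<lambda>r. - (V r + e\<^sup>2 / 4 * r)) has_real_derivative (x r - xs)\<^sup>2 - e\<^sup>2 / 4) (at r)"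
              using dV[of r] r t t0 Tb by (auto intro!: derivative_eq_intros)
            show "0 \<le> (x r - xs)\<^sup>2 - e\<^sup>2 / 4" using near[of r] r by simp
          qed (use d t t0 Tb in \<open>auto intro!: continuous_intros cV\<close>)
          then show ?thesis by simp
        qed
        then have "V (t + d) \<le> V t - k" unfolding k_def by (simp add: field_simps)
        moreover have "V t \<le> V t0" using Vmono[of t0 t] t t0 Tb by simp
        moreover have "Vinf \<le> V (t + d)" using Vinf_le[of "t + d"] t t0 Tb d by simp
        ultimately show False using t0 by simp
      qed
    qed
    then show ?thesis by blast
  qed
  have yconv: "\<exists>T. \<forall>t\<ge>T. \<bar>y t - ys\<bar> < e" if e: "e > 0" for e
  proof -
    define D where "D = 12 / e"
    have D: "D > 0" "e / 4 * D = 3" unfolding D_def using e by auto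
    define \<rho> where "\<rho> = e / (2 * (ys + e))"
    have yse0: "ys + e > 0" using e ys by simp
    have rho3: "\<rho> * (ys + e) = e / 2" unfolding \<rho>_def using yse0 by (simp add: field_simps)
    have rho1: "0 < \<rho>" unfolding \<rho>_def using yse0 e by simp
    have rho2: "\<rho> < 1" unfolding \<rho>_def using yse0 e ys by (simp add: field_simps)
    note rho = rho1 rho2 rho3
    define h where "h = min (xs/2) (min (e/4) (\<rho> / (Y * D)))"
    have h0: "h > 0" unfolding h_def using xs e rho D Y_pos by simp
    have h1: "h \<le> xs / 2" unfolding h_def by (rule min.cobounded1)
    have h2: "h \<le> e / 4" unfolding h_def by (meson min.cobounded1 min.cobounded2 order_trans)
    have h3: "Y * h * D \<le> \<rho>"
    proof -
      have "h \<le> \<rho> / (Y * D)" unfolding h_def by (meson min.cobounded2 order_trans)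
      then show ?thesis using Y_pos D by (simp add: field_simps)
    qed
    obtain T0 where T0: "\<forall>t\<ge>T0. \<bar>x t - xs\<bar> < h" using xconv[OF h0] by auto
    define T where "T = max T0 1"
    have "\<forall>t\<ge>T. \<bar>y t - ys\<bar> < e"
    proof (intro allI impI)
      fix t assume t: "t \<ge> T"
      have t0: "t > 0" "t \<ge> T0" using t unfolding T_def by auto
      have xn: "\<bar>x r - xs\<bar> < h" if "r \<ge> t" for r using T0 t0 that by simp
      have cy: "continuous_on {t..r} y" for r using t0 tau_nn by (intro conty') auto
      have cx: "continuous_on {t..r} x" for r using t0 tau_nn by (intro contx') auto
      have eD: "exp (- (e / 4) * D) \<le> 1 / 4"
      proof -
        have "exp (3::real) \<ge> 1 + 3" by (rule exp_ge_add_one_self)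
        then have "exp (- (3::real)) \<le> 1 / 4" by (simp add: exp_minus inverse_eq_divide field_simps)
        then show ?thesis using D by simp
      qed
      have eD': "exp (- (- e / 4) * D) \<ge> 4"
      proof -
        have "exp (3::real) \<ge> 1 + 3" by (rule exp_ge_add_one_self)
        then show ?thesis using D by simp
      qed
      show "\<bar>y t - ys\<bar> < e"
      proof (rule ccontr)
        assume "\<not> \<bar>y t - ys\<bar> < e"
        then consider (hi) "y t \<ge> ys + e" | (lo) "y t \<le> ys - e" by argo
        then show False
        proof cases
          case hi
          have yhi: "y r \<ge> ys + e / 2" if r: "t \<le> r" "r \<le> t + D" for r
          proof -
            have "y r \<ge> exp (- (Y * h) * (r - t)) * y t"
            proof (rule exp_lower[where f' = "\<lambda>z. Y * y z * (x z - xs)"])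
              fix z assume z: "t < z" "z < r"
              show "(y has_real_derivative Y * y z * (x z - xs)) (at z)" using dy0[of z] z t0 by simp
              have "x z - xs \<ge> - h" using xn[of z] z by (simp add: abs_less_iff)
              moreover have "Y * y z \<ge> 0" using ypos[of z] z t0 Y_pos by simp
              ultimately have "Y * y z * (x z - xs) \<ge> Y * y z * (- h)" by (intro mult_left_mono) auto
              then show "- (Y * h) * y z \<le> Y * y z * (x z - xs)" by (simp add: algebra_simps)
            qed (use r cy in auto)
            moreover have "exp (- (Y * h) * (r - t)) \<ge> 1 - \<rho>"
            proof -
              have "Y * h * (r - t) \<le> Y * h * D" using r Y_pos h0 by (intro mult_left_mono) auto
              then have "Y * h * (r - t) \<le> \<rho>" using h3 by simp
              then have "exp (- (Y * h) * (r - t)) \<ge> exp (- \<rho>)" by simp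
              moreover have "exp (- \<rho>) \<ge> 1 + (- \<rho>)" by (rule exp_ge_add_one_self)
              ultimately show ?thesis by linarith
            qed
            moreover have "exp (- (Y * h) * (r - t)) * y t \<ge> (1 - \<rho>) * y t"
              using calculation(2) ypos[of t] t0 by (intro mult_right_mono) auto
            ultimately have "y r \<ge> (1 - \<rho>) * y t" by linarith
            moreover have "(1 - \<rho>) * y t \<ge> (1 - \<rho>) * (ys + e)" using hi rho by (intro mult_left_mono) auto
            moreover have "(1 - \<rho>) * (ys + e) = ys + e / 2" using rho(3) by (simp add: algebra_simps)
            ultimately show ?thesis by simp
          qed
          have "x (t + D) \<le> exp (- (e / 4) * (t + D - t)) * x t"
          proof (rule exp_upper[where f' = "\<lambda>z. x z * (1 - x z) - y z * x z"])
            fix z assume z: "t < z" "z < t + D"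
            show "(x has_real_derivative x z * (1 - x z) - y z * x z) (at z)" using dx[of z] z t0 by simp
            have "x z - xs > - h" using xn[of z] z by (simp add: abs_less_iff)
            moreover have "y z \<ge> ys + e / 2" using yhi[of z] z by simp
            ultimately have "1 - x z - y z \<le> - (e / 4)" using h2 ys(2) by argo
            moreover have "x z > 0" using xpos[of z] z t0 by simp
            ultimately have "x z * (1 - x z - y z) \<le> x z * (- (e / 4))" by (intro mult_left_mono) auto
            then show "x z * (1 - x z) - y z * x z \<le> - (e / 4) * x z" by (simp add: algebra_simps)
          qed (use D cx in auto)
          then have "x (t + D) \<le> exp (- (e / 4) * D) * x t" by simp
          also have "\<dots> \<le> 1 / 4 * x t" using eD xpos[of t] t0 by (intro mult_right_mono) auto
          finally have "x (t + D) \<le> x t / 4" by simp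
          moreover have "x t < xs + h" using xn[of t] by (simp add: abs_less_iff)
          moreover have "x (t + D) > xs - h" using xn[of "t + D"] D by (simp add: abs_less_iff)
          ultimately show False using h1 xs by argo
        next
          case lo
          have ytpos: "y t > 0" using ypos t0 by simp
          have yse: "ys - e > 0" using lo ytpos by argo
          have ylo: "y r \<le> ys - e / 2" if r: "t \<le> r" "r \<le> t + D" for r
          proof -
            have "y r \<le> exp (- (- (Y * h)) * (r - t)) * y t"
            proof (rule exp_upper[where f' = "\<lambda>z. Y * y z * (x z - xs)"])
              fix z assume z: "t < z" "z < r"
              show "(y has_real_derivative Y * y z * (x z - xs)) (at z)" using dy0[of z] z t0 by simp
              have "x z - xs \<le> h" using xn[of z] z by (simp add: abs_less_iff)
              moreover have "Y * y z \<ge> 0" using ypos[of z] z t0 Y_pos by simp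
              ultimately have "Y * y z * (x z - xs) \<le> Y * y z * h" by (intro mult_left_mono) auto
              then show "Y * y z * (x z - xs) \<le> - (- (Y * h)) * y z" by (simp add: algebra_simps)
            qed (use r cy in auto)
            moreover have "exp (- (- (Y * h)) * (r - t)) \<le> exp \<rho>"
            proof -
              have "Y * h * (r - t) \<le> Y * h * D" using r Y_pos h0 by (intro mult_left_mono) auto
              then have "Y * h * (r - t) \<le> \<rho>" using h3 by simp
              then show ?thesis by simp
            qed
            moreover have "exp (- (- (Y * h)) * (r - t)) * y t \<le> exp \<rho> * y t"
              using calculation(2) ytpos by (intro mult_right_mono) auto
            ultimately have y1: "y r \<le> exp \<rho> * y t" by linarith
            have yy: "exp \<rho> * y t \<le> exp \<rho> * (ys - e)" using lo by simp
            have "exp \<rho> * (1 - \<rho>) \<le> 1"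
            proof -
              have "exp (- \<rho>) \<ge> 1 + (- \<rho>)" by (rule exp_ge_add_one_self)
              then have "exp \<rho> * (1 - \<rho>) \<le> exp \<rho> * exp (- \<rho>)" by (intro mult_left_mono) auto
              then show ?thesis by (simp add: exp_minus)
            qed
            then have "(exp \<rho> * (1 - \<rho>)) * (ys - e) \<le> 1 * (ys - e)" using yse
              by (intro mult_right_mono) auto
            then have "exp \<rho> * (ys - e) * (1 - \<rho>) \<le> ys - e" by (simp add: algebra_simps)
            then have "exp \<rho> * (ys - e) \<le> (ys - e) / (1 - \<rho>)" using rho by (simp add: field_simps)
            moreover have "(ys - e) / (1 - \<rho>) \<le> ys - e / 2"
            proof -
              have "\<rho> * (ys - e / 2) \<le> \<rho> * (ys + e)" using rho e by (intro mult_left_mono) auto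
              moreover have "(ys - e / 2) * (1 - \<rho>) = ys - e / 2 - \<rho> * (ys - e / 2)"
                by (simp add: field_simps)
              ultimately have "ys - e \<le> (ys - e / 2) * (1 - \<rho>)" using rho(3) by argo
              then show ?thesis using rho by (simp add: field_simps)
            qed
            ultimately show ?thesis using y1 yy by linarith
          qed
          have "x (t + D) \<ge> exp (- (- e / 4) * (t + D - t)) * x t"
          proof (rule exp_lower[where f' = "\<lambda>z. x z * (1 - x z) - y z * x z"])
            fix z assume z: "t < z" "z < t + D"
            show "(x has_real_derivative x z * (1 - x z) - y z * x z) (at z)" using dx[of z] z t0 by simp
            have "x z - xs < h" using xn[of z] z by (simp add: abs_less_iff)
            moreover have "y z \<le> ys - e / 2" using ylo[of z] z by simp
            ultimately have "1 - x z - y z \<ge> e / 4" using h2 ys(2) by argo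
            moreover have "x z > 0" using xpos[of z] z t0 by simp
            ultimately have "x z * (e / 4) \<le> x z * (1 - x z - y z)" by (intro mult_left_mono) auto
            then show "- (- e / 4) * x z \<le> x z * (1 - x z) - y z * x z" by (simp add: algebra_simps)
          qed (use D cx in auto)
          then have "x (t + D) \<ge> exp (- (- e / 4) * D) * x t" by simp
          moreover have "exp (- (- e / 4) * D) * x t \<ge> 4 * x t" using eD' xpos[of t] t0 by (intro mult_right_mono) auto
          moreover have "x t > xs - h" using xn[of t] by (simp add: abs_less_iff)
          moreover have "x (t + D) < xs + h" using xn[of "t + D"] D by (simp add: abs_less_iff)
          ultimately show False using h1 xs by argo
        qed
      qed
    qed
    then show ?thesis by blast
  qed
  show ?thesis using tendsto_at_topI_eps[OF xconv] tendsto_at_topI_eps[OF yconv]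
    unfolding xs_def ys_def by simp
qed

end

lemma cf_E0: "char_fun s Y \<tau> E0 z = (z - 1) * (z + of_real s)"
  unfolding char_fun_def E0_def Let_def by (simp add: algebra_simps)

lemma cf_E1: "char_fun s Y \<tau> E1 z = (z + 1) * (z + of_real s - exp (- z * of_real \<tau>) * of_real (Y * exp (- s * \<tau>)))"
  unfolding char_fun_def E1_def Let_def by (simp add: algebra_simps)

lemma cf_Ep0: "Y > 0 \<Longrightarrow> char_fun s Y 0 (Eplus s Y 0) z = z * z + of_real (s / Y) * z + of_real (s / Y * Y * (1 - s / Y))"
  unfolding char_fun_def Eplus_def Let_def by (simp add: field_simps)


lemma tau_c_lt: "s > 0 \<Longrightarrow> Y > 0 \<Longrightarrow> \<tau> < tau_c s Y \<longleftrightarrow> s * exp (s * \<tau>) < Y"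
proof -
  assume s: "s > 0" and Y: "Y > 0"
  have "\<tau> < tau_c s Y \<longleftrightarrow> s * \<tau> < ln (Y / s)" unfolding tau_c_def using s by (simp add: field_simps)
  also have "\<dots> \<longleftrightarrow> exp (s * \<tau>) < Y / s" using s Y by (metis exp_less_cancel_iff exp_ln divide_pos_pos)
  also have "\<dots> \<longleftrightarrow> s * exp (s * \<tau>) < Y" using s by (simp add: field_simps)
  finally show ?thesis .
qed

lemma tau_c_gt: "s > 0 \<Longrightarrow> Y > 0 \<Longrightarrow> \<tau> > tau_c s Y \<longleftrightarrow> s * exp (s * \<tau>) > Y"
proof -
  assume s: "s > 0" and Y: "Y > 0"
  have "\<tau> > tau_c s Y \<longleftrightarrow> s * \<tau> > ln (Y / s)" unfolding tau_c_def using s by (simp add: field_simps)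
  also have "\<dots> \<longleftrightarrow> exp (s * \<tau>) > Y / s" using s Y by (metis exp_less_cancel_iff exp_ln divide_pos_pos)
  also have "\<dots> \<longleftrightarrow> s * exp (s * \<tau>) > Y" using s by (simp add: field_simps)
  finally show ?thesis .
qed

lemma E0_unstable: "s > 0 \<Longrightarrow> unstable s Y \<tau> E0"
  unfolding unstable_def cf_E0 by (intro exI[of _ 1]) simp

lemma E1_unstable:
  assumes s: "s > 0" and Y: "Y > 0" and t: "\<tau> \<ge> 0" and lt: "s * exp (s * \<tau>) < Y"
  shows "unstable s Y \<tau> E1"
proof -
  define f where "f w = w * exp (w * \<tau>)" for w
  have sY: "s \<le> Y"
  proof -
    have "exp (s * \<tau>) \<ge> 1" using s t by simp
    then have "s \<le> s * exp (s * \<tau>)" using s by simp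
    then show ?thesis using lt by simp
  qed
  have fs: "f s \<le> Y" using lt unfolding f_def by simp
  have fY: "Y \<le> f Y"
  proof -
    have "exp (Y * \<tau>) \<ge> 1" using Y t by simp
    then show ?thesis unfolding f_def using Y by simp
  qed
  have cf: "continuous_on {s..Y} f" unfolding f_def by (intro continuous_intros)
  obtain w where w: "s \<le> w" "w \<le> Y" "f w = Y" using IVT'[of f s Y Y, OF fs fY sY cf] by auto
  have ws: "w > s" using w lt unfolding f_def by (cases "w = s") auto
  have wY: "w = Y * exp (- w * \<tau>)"
  proof -
    have "Y * exp (- w * \<tau>) = w * exp (w * \<tau>) * exp (- w * \<tau>)" using w(3) unfolding f_def by simp
    also have "\<dots> = w" by (simp add: mult.assoc exp_add[symmetric])
    finally show ?thesis by simp
  qed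
  define z where "z = complex_of_real (w - s)"
  have ez: "exp (- z * of_real \<tau>) = complex_of_real (exp (- (w - s) * \<tau>))"
  proof -
    have "- z * of_real \<tau> = complex_of_real (- (w - s) * \<tau>)" unfolding z_def by simp
    then show ?thesis by (simp only: exp_of_real)
  qed
  have e: "exp (- z * of_real \<tau>) * of_real (Y * exp (- s * \<tau>))
      = complex_of_real (exp (- (w - s) * \<tau>) * (Y * exp (- s * \<tau>)))"
    unfolding ez by simp
  have "z + of_real s - exp (- z * of_real \<tau>) * of_real (Y * exp (- s * \<tau>))
      = complex_of_real (w - Y * (exp (- (w - s) * \<tau>) * exp (- s * \<tau>)))"
    unfolding e by (simp add: z_def algebra_simps)
  also have "exp (- (w - s) * \<tau>) * exp (- s * \<tau>) = exp (- w * \<tau>)"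
    by (simp add: exp_add[symmetric] algebra_simps)
  finally have X: "z + of_real s - exp (- z * of_real \<tau>) * of_real (Y * exp (- s * \<tau>))
     = complex_of_real (w - Y * exp (- w * \<tau>))" .
  have "w - Y * exp (- w * \<tau>) = 0" using wY by simp
  then have "z + of_real s - exp (- z * of_real \<tau>) * of_real (Y * exp (- s * \<tau>)) = 0"
    unfolding X by simp
  then have "char_fun s Y \<tau> E1 z = 0" unfolding cf_E1 by simp
  moreover have "Re z > 0" unfolding z_def using ws by simp
  ultimately show ?thesis unfolding unstable_def by blast
qed

lemma E1_stable:
  assumes s: "s > 0" and Y: "Y > 0" and t: "\<tau> \<ge> 0" and lt: "Y * exp (- s * \<tau>) < s"
  shows "locally_asymp_stable s Y \<tau> E1"
  unfolding locally_asymp_stable_def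
proof (intro allI impI)
  fix z assume "char_fun s Y \<tau> E1 z = 0"
  then have "(z + 1) * (z + of_real s - exp (- z * of_real \<tau>) * of_real (Y * exp (- s * \<tau>))) = 0"
    unfolding cf_E1 .
  then consider "z + 1 = 0" | "z + of_real s = exp (- z * of_real \<tau>) * of_real (Y * exp (- s * \<tau>))"
    by (metis mult_eq_0_iff eq_iff_diff_eq_0)
  then show "Re z < 0"
  proof cases
    case 1
    have "z = (z + 1) - 1" by simp
    also have "\<dots> = -1" using 1 by simp
    finally have "z = -1" .
    then show ?thesis by simp
  next
    case 2
    show ?thesis
    proof (rule ccontr)
      assume "\<not> Re z < 0"
      then have rz: "Re z \<ge> 0" by simp
      have "norm (z + of_real s) \<ge> Re (z + of_real s)" by (rule complex_Re_le_cmod)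
      then have n1: "norm (z + of_real s) \<ge> s" using rz by simp
      have "norm (exp (- z * of_real \<tau>) * of_real (Y * exp (- s * \<tau>)))
          = exp (- Re z * \<tau>) * (Y * exp (- s * \<tau>))"
        using Y by (simp add: norm_mult norm_exp_eq_Re)
      also have "\<dots> \<le> 1 * (Y * exp (- s * \<tau>))"
        using rz t Y by (intro mult_right_mono) (auto simp: mult_nonneg_nonneg)
      finally have "norm (exp (- z * of_real \<tau>) * of_real (Y * exp (- s * \<tau>))) < s" using lt by simp
      then show False using n1 2 by simp
    qed
  qed
qed

lemma Ep0_stable:
  assumes s: "s > 0" and Y: "Y > 0" and sY: "s < Y"
  shows "locally_asymp_stable s Y 0 (Eplus s Y 0)"
  unfolding locally_asymp_stable_def
proof (intro allI impI)
  fix z assume "char_fun s Y 0 (Eplus s Y 0) z = 0"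
  then have eq: "z * z + of_real (s / Y) * z + of_real (s / Y * Y * (1 - s / Y)) = 0"
    using cf_Ep0[OF Y] by simp
  define a where "a = s / Y"
  define k where "k = s / Y * Y * (1 - s / Y)"
  have a: "a > 0" unfolding a_def using s Y by simp
  have k: "k > 0" unfolding k_def using s Y sY by (simp add: field_simps)
  define p where "p = Re z"
  define q where "q = Im z"
  have re: "p * p - q * q + a * p + k = 0"
    using arg_cong[OF eq, of Re] unfolding p_def q_def a_def k_def by simp
  have im: "2 * p * q + a * q = 0"
    using arg_cong[OF eq, of Im] unfolding p_def q_def a_def k_def by (simp add: algebra_simps)
  show "Re z < 0"
  proof (cases "q = 0")
    case True
    then have "p * p + a * p + k = 0" using re by simp
    moreover have "p \<ge> 0 \<Longrightarrow> p * p + a * p + k > 0" using a k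
      by (simp add: add_nonneg_pos add_pos_nonneg)
    ultimately show ?thesis unfolding p_def by force
  next
    case False
    then have "2 * p + a = 0" using im by (metis distrib_right mult_eq_0_iff)
    then show ?thesis unfolding p_def using a by simp
  qed
qed


lemma eps0_pos_g: "s > 0 \<Longrightarrow> Y > 0 \<Longrightarrow> eps0 s Y \<tau> > 0"
  unfolding eps0_def delg_def by simp

lemma eta0_pos_g:
  assumes s: "s > 0" and Y: "Y > 0" and lt: "s * exp (s * \<tau>) < Y"
  shows "eta0 s Y \<tau> > 0"
proof -
  define xs where "xs = s / (Y * exp (- s * \<tau>))"
  have xs_eq: "xs = s * exp (s * \<tau>) / Y" unfolding xs_def by (simp add: exp_minus field_simps)
  have xs: "0 < xs" "xs < 1" unfolding xs_eq using s Y lt by auto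
  have x1: "0 < x1g s Y \<tau>" "x1g s Y \<tau> < 1" unfolding x1g_def xs_def[symmetric] using xs by auto
  have w: "wg s Y \<tau> > 0" unfolding wg_def using x1 by (simp add: field_simps)
  have "eta1 s Y \<tau> > 0" unfolding eta1_def using w by simp
  then show ?thesis unfolding eta0_def by simp
qed

theorem theorem3p1:
  fixes s Y \<tau> :: real
  assumes "s > 0" and "Y > 0" and "\<tau> \<ge> 0"
  shows
    "unstable s Y \<tau> E0 \<and>
     (\<tau> < tau_c s Y \<longrightarrow> unstable s Y \<tau> E1) \<and>
     (\<tau> > tau_c s Y \<longrightarrow> globally_asymp_stable s Y \<tau> E1 (in_X0 \<tau>)) \<and>
     ((fst (Eplus s Y \<tau>) > 0 \<and> snd (Eplus s Y \<tau>) > 0) \<longleftrightarrow> \<tau> < tau_c s Y) \<and>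
     (fst (Eplus s Y \<tau>) > 0 \<and> snd (Eplus s Y \<tau>) > 0 \<and> \<tau> = 0 \<longrightarrow>
        globally_asymp_stable s Y \<tau> (Eplus s Y \<tau>) in_int_R2plus) \<and>
     (fst (Eplus s Y \<tau>) > 0 \<and> snd (Eplus s Y \<tau>) > 0 \<longrightarrow>
        (\<exists>\<epsilon>>0. \<forall>\<phi> \<psi> x y. in_X0 \<tau> \<phi> \<psi> \<longrightarrow> is_solution s Y \<tau> \<phi> \<psi> x y \<longrightarrow>
            Liminf at_top (\<lambda>t. ereal (x t)) > ereal \<epsilon> \<and>
            Liminf at_top (\<lambda>t. ereal (y t)) > ereal \<epsilon>))"
proof -
  note s = assms(1) and Y = assms(2) and t = assms(3)
  have pos_iff: "(fst (Eplus s Y \<tau>) > 0 \<and> snd (Eplus s Y \<tau>) > 0) \<longleftrightarrow> s * exp (s * \<tau>) < Y"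
    unfolding Eplus_def using s Y by (simp add: field_simps)
  have P1: "unstable s Y \<tau> E0" using E0_unstable s by blast
  have P2: "\<tau> < tau_c s Y \<longrightarrow> unstable s Y \<tau> E1"
    using E1_unstable[OF s Y t] tau_c_lt[OF s Y] by blast
  have P3: "\<tau> > tau_c s Y \<longrightarrow> globally_asymp_stable s Y \<tau> E1 (in_X0 \<tau>)"
  proof
    assume "\<tau> > tau_c s Y"
    then have gt: "s * exp (s * \<tau>) > Y" using tau_c_gt[OF s Y] by blast
    have ccs: "Y * exp (- s * \<tau>) < s"
    proof -
      have "Y * exp (- s * \<tau>) = Y / exp (s * \<tau>)" by (simp add: exp_minus divide_inverse)
      also have "\<dots> < s" using gt by (simp add: divide_less_eq)
      finally show ?thesis .
    qed
    show "globally_asymp_stable s Y \<tau> E1 (in_X0 \<tau>)" unfolding globally_asymp_stable_def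
    proof (intro conjI allI impI)
      show "locally_asymp_stable s Y \<tau> E1" by (rule E1_stable[OF s Y t ccs])
      fix \<phi> \<psi> x y assume X0: "in_X0 \<tau> \<phi> \<psi>" and S: "is_solution s Y \<tau> \<phi> \<psi> x y"
      interpret sol s Y \<tau> \<phi> \<psi> x y
        by unfold_locales (use s Y t X0 S in \<open>auto simp: in_X0_def in_X_def\<close>)
      have "cc < s" using ccs unfolding cc_def .
      then have "(x \<longlongrightarrow> 1) at_top \<and> (y \<longlongrightarrow> 0) at_top" by (rule conv_E1)
      then show "(x \<longlongrightarrow> fst E1) at_top" "(y \<longlongrightarrow> snd E1) at_top" by (simp_all add: E1_def)
    qed
  qed
  have P4: "(fst (Eplus s Y \<tau>) > 0 \<and> snd (Eplus s Y \<tau>) > 0) \<longleftrightarrow> \<tau> < tau_c s Y"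
    using pos_iff tau_c_lt[OF s Y] by blast
  have P5: "fst (Eplus s Y \<tau>) > 0 \<and> snd (Eplus s Y \<tau>) > 0 \<and> \<tau> = 0 \<longrightarrow>
        globally_asymp_stable s Y \<tau> (Eplus s Y \<tau>) in_int_R2plus"
  proof
    assume h: "fst (Eplus s Y \<tau>) > 0 \<and> snd (Eplus s Y \<tau>) > 0 \<and> \<tau> = 0"
    then have t0: "\<tau> = 0" by simp
    have sY: "s < Y" using h pos_iff t0 by simp
    have Ep: "Eplus s Y \<tau> = (s / Y, 1 - s / Y)" unfolding Eplus_def t0 by simp
    show "globally_asymp_stable s Y \<tau> (Eplus s Y \<tau>) in_int_R2plus" unfolding globally_asymp_stable_def
    proof (intro conjI allI impI)
      show "locally_asymp_stable s Y \<tau> (Eplus s Y \<tau>)" unfolding t0 by (rule Ep0_stable[OF s Y sY])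
      fix \<phi> \<psi> x y assume I: "in_int_R2plus \<phi> \<psi>" and S: "is_solution s Y \<tau> \<phi> \<psi> x y"
      interpret sol s Y \<tau> \<phi> \<psi> x y
        by unfold_locales (use s Y t I S t0 in \<open>auto simp: in_int_R2plus_def\<close>)
      have y0: "\<psi> 0 > 0" using I unfolding in_int_R2plus_def by simp
      have "(x \<longlongrightarrow> s / Y) at_top \<and> (y \<longlongrightarrow> 1 - s / Y) at_top" by (rule conv_Eplus0[OF t0 sY y0])
      then show "(x \<longlongrightarrow> fst (Eplus s Y \<tau>)) at_top" "(y \<longlongrightarrow> snd (Eplus s Y \<tau>)) at_top"
        unfolding Ep by simp_all
    qed
  qed
  have P6: "fst (Eplus s Y \<tau>) > 0 \<and> snd (Eplus s Y \<tau>) > 0 \<longrightarrow>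
        (\<exists>\<epsilon>>0. \<forall>\<phi> \<psi> x y. in_X0 \<tau> \<phi> \<psi> \<longrightarrow> is_solution s Y \<tau> \<phi> \<psi> x y \<longrightarrow>
            Liminf at_top (\<lambda>t. ereal (x t)) > ereal \<epsilon> \<and>
            Liminf at_top (\<lambda>t. ereal (y t)) > ereal \<epsilon>)"
  proof
    assume "fst (Eplus s Y \<tau>) > 0 \<and> snd (Eplus s Y \<tau>) > 0"
    then have lt: "s * exp (s * \<tau>) < Y" using pos_iff by blast
    have scc: "s < Y * exp (- s * \<tau>)"
    proof -
      have "Y * exp (- s * \<tau>) = Y / exp (s * \<tau>)" by (simp add: exp_minus divide_inverse)
      moreover have "s < Y / exp (s * \<tau>)" using lt by (simp add: less_divide_eq)
      ultimately show ?thesis by simp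
    qed
    define \<epsilon> where "\<epsilon> = min (eps0 s Y \<tau>) (eta0 s Y \<tau>) / 2"
    have e1: "eps0 s Y \<tau> > 0" by (rule eps0_pos_g[OF s Y])
    have e2: "eta0 s Y \<tau> > 0" by (rule eta0_pos_g[OF s Y lt])
    have \<epsilon>: "\<epsilon> > 0" "\<epsilon> < eps0 s Y \<tau>" "\<epsilon> < eta0 s Y \<tau>" unfolding \<epsilon>_def using e1 e2 by auto
    have "\<forall>\<phi> \<psi> x y. in_X0 \<tau> \<phi> \<psi> \<longrightarrow> is_solution s Y \<tau> \<phi> \<psi> x y \<longrightarrow>
            Liminf at_top (\<lambda>t. ereal (x t)) > ereal \<epsilon> \<and>
            Liminf at_top (\<lambda>t. ereal (y t)) > ereal \<epsilon>"
    proof (intro allI impI)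
      fix \<phi> \<psi> x y assume X0: "in_X0 \<tau> \<phi> \<psi>" and S: "is_solution s Y \<tau> \<phi> \<psi> x y"
      interpret sol s Y \<tau> \<phi> \<psi> x y
        by unfold_locales (use s Y t X0 S in \<open>auto simp: in_X0_def in_X_def\<close>)
      have cs: "s < cc" using scc unfolding cc_def .
      obtain \<theta> where th: "\<theta> \<in> {-\<tau>..0}" "\<phi> \<theta> * \<psi> \<theta> > 0" using X0 unfolding in_X0_def by auto
      have yp: "\<exists>t0\<ge>0. \<forall>t\<ge>t0. y t > 0" by (rule y_ev_pos[OF th])
      obtain T1 where T1: "\<forall>t\<ge>T1. x t \<ge> eps0 s Y \<tau>" using x_persist[OF cs] by auto
      obtain T2 where T2: "\<forall>t\<ge>T2. y t \<ge> eta0 s Y \<tau>" using y_persist[OF cs yp] by auto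
      have "ereal (eps0 s Y \<tau>) \<le> Liminf at_top (\<lambda>t. ereal (x t))"
        by (rule Liminf_bounded) (use T1 in \<open>auto simp: eventually_at_top_linorder\<close>)
      moreover have "ereal (eta0 s Y \<tau>) \<le> Liminf at_top (\<lambda>t. ereal (y t))"
        by (rule Liminf_bounded) (use T2 in \<open>auto simp: eventually_at_top_linorder\<close>)
      moreover have "ereal \<epsilon> < ereal (eps0 s Y \<tau>)" "ereal \<epsilon> < ereal (eta0 s Y \<tau>)" using \<epsilon> by auto
      ultimately show "Liminf at_top (\<lambda>t. ereal (x t)) > ereal \<epsilon> \<and>
            Liminf at_top (\<lambda>t. ereal (y t)) > ereal \<epsilon>" by (meson less_le_trans)
    qed
    then show "\<exists>\<epsilon>>0. \<forall>\<phi> \<psi> x y. in_X0 \<tau> \<phi> \<psi> \<longrightarrow> is_solution s Y \<tau> \<phi> \<psi> x y \<longrightarrow>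
            Liminf at_top (\<lambda>t. ereal (x t)) > ereal \<epsilon> \<and>
            Liminf at_top (\<lambda>t. ereal (y t)) > ereal \<epsilon>" using \<epsilon>(1) by blast
  qed
  show ?thesis using P1 P2 P3 P4 P5 P6 by blast
qed

end
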